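(* Let $\Bbbk$ be a commutative ring and let $V$ be an $\mathrm{FI}$-module. Then there is a short exact sequence of $\mathrm{FI}$-modules $$0\longrightarrow \widetilde{S}_{-1}V\longrightarrow QV\longrightarrow V\longrightarrow 0$$ which splits after applying the forgetful functor from $\mathrm{FI}$-modules to $\mathrm{FB}$-modules.
   Context: $\mathrm{FI}$ is the category whose objects are finite sets and whose morphisms are injective maps; $\mathrm{FB}$ is its subcategory with the same objects and bijections as morphisms. An $\mathrm{FI}$-module (resp. $\mathrm{FB}$-module) is a functor from $\mathrm{FI}$ (resp. $\mathrm{FB}$) to $\Bbbk$-modules; the forgetful functor restricts an $\mathrm{FI}$-module along $\mathrm{FB}\subset\mathrm{FI}$. Write $V_X=V(X)$ and $f_*=V(f)$. For a finite set $X$, $M(X)$ is the $\mathrm{FI}$-module with $M(X)_Y=\Bbbk\,\mathrm{FI}(X,Y)$ (free $\Bbbk$-module on injections $X\to Y$), with structure maps given by postcomposition; for $f\in\mathrm{FI}(X,Y)$ let $\rho_f:M(Y)\to M(X)$, $g\mapsto g\circ f$. Fix a one-element set $\{\star\}$; the shift functor is $SV=V\circ\sigma$ where $\sigma(X)=X\sqcup\{\star\}$, $\sigma(f)=f\sqcup\mathrm{id}_{\{\star\}}$. The coinduction of $V$ is the $\mathrm{FI}$-module $QV$ with $(QV)_X=\mathrm{Hom}_{\mathrm{FI}\text{-}\mathrm{Mod}}(S(M(X)),V)$ and $f_*(\phi)=\phi\circ S(\rho_f)$ for $f\in\mathrm{FI}(X,Y)$. The negative-one shift $\widetilde{S}_{-1}V$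 is defined by $(\widetilde{S}_{-1}V)_X=\bigoplus_{x\in X}V_{X\setminus\{x\}}$, and for an injection $f:X\to Y$, $f_*$ restricts on the summand $V_{X\setminus\{x\}}$ to $(f|_{X\setminus\{x\}})_*:V_{X\setminus\{x\}}\to V_{Y\setminus\{f(x)\}}$. *)

theory Defs
  imports "HOL-Algebra.Module" "HOL-Library.FuncSet"
begin

text \<open>Objects of FI are finite sets; we use finite subsets of nat (an equivalent
category). A morphism X \<rightarrow> Y is an injective map, represented as an extensional
function on X.\<close>

definition FI_hom :: "nat set \<Rightarrow> nat set \<Rightarrow> (nat \<Rightarrow> nat) set" where
  "FI_hom X Y = {f. f \<in> X \<rightarrow>\<^sub>E Y \<and> inj_on f X}"

definition FB_hom :: "nat set \<Rightarrow> nat set \<Rightarrow> (nat \<Rightarrow> nat) set" where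
  "FB_hom X Y = {f. f \<in> FI_hom X Y \<and> f ` X = Y}"

text \<open>Shift: sigma X = X disjoint-union {star}, modelled as insert 0 (Suc ` X) with star = 0.\<close>
definition sigma_obj :: "nat set \<Rightarrow> nat set" where
  "sigma_obj X = insert 0 (Suc ` X)"

definition sigma_mor :: "nat set \<Rightarrow> (nat \<Rightarrow> nat) \<Rightarrow> (nat \<Rightarrow> nat)" where
  "sigma_mor X f = restrict (\<lambda>m. if m = 0 then 0 else Suc (f (m - 1))) (sigma_obj X)"

definition lin_map :: "('k, 'r) ring_scheme \<Rightarrow> ('k, 'v, 'a) module_scheme
    \<Rightarrow> ('k, 'w, 'b) module_scheme \<Rightarrow> ('v \<Rightarrow> 'w) \<Rightarrow> bool" where
  "lin_map R M N h \<longleftrightarrow> h \<in> carrier M \<rightarrow> carrier N \<and>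
     (\<forall>x\<in>carrier M. \<forall>y\<in>carrier M. h (x \<oplus>\<^bsub>M\<^esub> y) = h x \<oplus>\<^bsub>N\<^esub> h y) \<and>
     (\<forall>c\<in>carrier R. \<forall>x\<in>carrier M. h (c \<odot>\<^bsub>M\<^esub> x) = c \<odot>\<^bsub>N\<^esub> h x)"

record ('k, 'v) FImod =
  obj :: "nat set \<Rightarrow> ('k, 'v) module"
  mor :: "nat set \<Rightarrow> nat set \<Rightarrow> (nat \<Rightarrow> nat) \<Rightarrow> 'v \<Rightarrow> 'v"

definition FI_module :: "('k, 'r) ring_scheme \<Rightarrow> ('k, 'v) FImod \<Rightarrow> bool" where
  "FI_module R V \<longleftrightarrow>
     (\<forall>X. finite X \<longrightarrow> module R (obj V X)) \<and>
     (\<forall>X Y f. finite X \<longrightarrow> finite Y \<longrightarrow> f \<in> FI_hom X Y \<longrightarrow>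
        lin_map R (obj V X) (obj V Y) (mor V X Y f)) \<and>
     (\<forall>X. finite X \<longrightarrow> (\<forall>v\<in>carrier (obj V X). mor V X X (restrict id X) v = v)) \<and>
     (\<forall>X Y Z f g. finite X \<longrightarrow> finite Y \<longrightarrow> finite Z \<longrightarrow> f \<in> FI_hom X Y \<longrightarrow> g \<in> FI_hom Y Z \<longrightarrow>
        (\<forall>v\<in>carrier (obj V X). mor V X Z (compose X g f) v = mor V Y Z g (mor V X Y f v)))"

definition FI_morphism :: "('k, 'r) ring_scheme \<Rightarrow> ('k, 'v) FImod \<Rightarrow> ('k, 'w) FImod
    \<Rightarrow> (nat set \<Rightarrow> 'v \<Rightarrow> 'w) \<Rightarrow> bool" where
  "FI_morphism R V W \<eta> \<longleftrightarrow>
     (\<forall>X. finite X \<longrightarrow> lin_map R (obj V X) (obj W X) (\<eta> X)) \<and>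
     (\<forall>X Y f. finite X \<longrightarrow> finite Y \<longrightarrow> f \<in> FI_hom X Y \<longrightarrow>
        (\<forall>v\<in>carrier (obj V X). \<eta> Y (mor V X Y f v) = mor W X Y f (\<eta> X v)))"

definition FB_morphism :: "('k, 'r) ring_scheme \<Rightarrow> ('k, 'v) FImod \<Rightarrow> ('k, 'w) FImod
    \<Rightarrow> (nat set \<Rightarrow> 'v \<Rightarrow> 'w) \<Rightarrow> bool" where
  "FB_morphism R V W \<eta> \<longleftrightarrow>
     (\<forall>X. finite X \<longrightarrow> lin_map R (obj V X) (obj W X) (\<eta> X)) \<and>
     (\<forall>X Y f. finite X \<longrightarrow> finite Y \<longrightarrow> f \<in> FB_hom X Y \<longrightarrow>
        (\<forall>v\<in>carrier (obj V X). \<eta> Y (mor V X Y f v) = mor W X Y f (\<eta> X v)))"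

definition short_exact :: "('k, 'r) ring_scheme \<Rightarrow> ('k, 'a) FImod \<Rightarrow> ('k, 'b) FImod \<Rightarrow> ('k, 'c) FImod
    \<Rightarrow> (nat set \<Rightarrow> 'a \<Rightarrow> 'b) \<Rightarrow> (nat set \<Rightarrow> 'b \<Rightarrow> 'c) \<Rightarrow> bool" where
  "short_exact R A B C i p \<longleftrightarrow>
     FI_morphism R A B i \<and> FI_morphism R B C p \<and>
     (\<forall>X. finite X \<longrightarrow>
        inj_on (i X) (carrier (obj A X)) \<and>
        p X ` carrier (obj B X) = carrier (obj C X) \<and>
        i X ` carrier (obj A X) = {b \<in> carrier (obj B X). p X b = \<zero>\<^bsub>obj C X\<^esub>})"

definition free_mod :: "('k, 'r) ring_scheme \<Rightarrow> 'b set \<Rightarrow> ('k, 'b \<Rightarrow> 'k) module" where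
  "free_mod R B = \<lparr> carrier = B \<rightarrow>\<^sub>E carrier R,
       mult = (\<lambda>a b. undefined), one = undefined,
       zero = restrict (\<lambda>_. \<zero>\<^bsub>R\<^esub>) B,
       add = (\<lambda>a b. restrict (\<lambda>x. a x \<oplus>\<^bsub>R\<^esub> b x) B),
       smult = (\<lambda>c a. restrict (\<lambda>x. c \<otimes>\<^bsub>R\<^esub> a x) B) \<rparr>"

definition lin_ext :: "('k, 'r) ring_scheme \<Rightarrow> 'b set \<Rightarrow> 'c set \<Rightarrow> ('b \<Rightarrow> 'c)
    \<Rightarrow> ('b \<Rightarrow> 'k) \<Rightarrow> ('c \<Rightarrow> 'k)" where
  "lin_ext R B B' g a = restrict (\<lambda>y. finsum R a {x \<in> B. g x = y}) B'"

definition Mrep :: "('k, 'r) ring_scheme \<Rightarrow> nat set \<Rightarrow> ('k, (nat \<Rightarrow> nat) \<Rightarrow> 'k) FImod" where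
  "Mrep R X = \<lparr> obj = (\<lambda>Y. free_mod R (FI_hom X Y)),
       mor = (\<lambda>Y Z h. lin_ext R (FI_hom X Y) (FI_hom X Z) (\<lambda>g. compose X h g)) \<rparr>"

definition rho :: "('k, 'r) ring_scheme \<Rightarrow> nat set \<Rightarrow> nat set \<Rightarrow> (nat \<Rightarrow> nat)
    \<Rightarrow> nat set \<Rightarrow> ((nat \<Rightarrow> nat) \<Rightarrow> 'k) \<Rightarrow> ((nat \<Rightarrow> nat) \<Rightarrow> 'k)" where
  "rho R X Y f Z = lin_ext R (FI_hom Y Z) (FI_hom X Z) (\<lambda>g. compose X g f)"

definition shift :: "('k, 'v) FImod \<Rightarrow> ('k, 'v) FImod" where
  "shift V = \<lparr> obj = (\<lambda>X. obj V (sigma_obj X)),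
       mor = (\<lambda>X Y f. mor V (sigma_obj X) (sigma_obj Y) (sigma_mor X f)) \<rparr>"

text \<open>(QV)_X = Hom_{FI-Mod}(S(M(X)), V): natural transformations, represented
extensionally (undefined on infinite sets and outside carriers).\<close>
definition Hom_carrier :: "('k, 'r) ring_scheme \<Rightarrow> ('k, 'a) FImod \<Rightarrow> ('k, 'v) FImod
    \<Rightarrow> (nat set \<Rightarrow> 'a \<Rightarrow> 'v) set" where
  "Hom_carrier R A V = {\<phi>. FI_morphism R A V \<phi> \<and>
      (\<forall>Y. \<not> finite Y \<longrightarrow> \<phi> Y = undefined) \<and>
      (\<forall>Y. finite Y \<longrightarrow> \<phi> Y \<in> extensional (carrier (obj A Y)))}"

definition Hom_mod :: "('k, 'r) ring_scheme \<Rightarrow> ('k, 'a) FImod \<Rightarrow> ('k, 'v) FImod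
    \<Rightarrow> ('k, nat set \<Rightarrow> 'a \<Rightarrow> 'v) module" where
  "Hom_mod R A V = \<lparr> carrier = Hom_carrier R A V,
     mult = (\<lambda>a b. undefined), one = undefined,
     zero = (\<lambda>Y. if finite Y then restrict (\<lambda>m. \<zero>\<^bsub>obj V Y\<^esub>) (carrier (obj A Y)) else undefined),
     add = (\<lambda>\<phi> \<psi> Y. if finite Y then
               restrict (\<lambda>m. \<phi> Y m \<oplus>\<^bsub>obj V Y\<^esub> \<psi> Y m) (carrier (obj A Y)) else undefined),
     smult = (\<lambda>c \<phi> Y. if finite Y then
               restrict (\<lambda>m. c \<odot>\<^bsub>obj V Y\<^esub> \<phi> Y m) (carrier (obj A Y)) else undefined) \<rparr>"

definition coind :: "('k, 'r) ring_scheme \<Rightarrow> ('k, 'v) FImod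
    \<Rightarrow> ('k, nat set \<Rightarrow> ((nat \<Rightarrow> nat) \<Rightarrow> 'k) \<Rightarrow> 'v) FImod" where
  "coind R V = \<lparr> obj = (\<lambda>X. Hom_mod R (shift (Mrep R X)) V),
     mor = (\<lambda>X Y f \<phi> W. if finite W then
              restrict (\<lambda>m. \<phi> W (rho R X Y f (sigma_obj W) m))
                       (carrier (obj (shift (Mrep R Y)) W))
            else undefined) \<rparr>"

definition negshift :: "('k, 'v) FImod \<Rightarrow> ('k, nat \<Rightarrow> 'v) FImod" where
  "negshift V = \<lparr> obj = (\<lambda>X. \<lparr> carrier = (\<Pi>\<^sub>E x\<in>X. carrier (obj V (X - {x}))),
        mult = (\<lambda>a b. undefined), one = undefined,
        zero = restrict (\<lambda>x. \<zero>\<^bsub>obj V (X - {x})\<^esub>) X,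
        add = (\<lambda>a b. restrict (\<lambda>x. a x \<oplus>\<^bsub>obj V (X - {x})\<^esub> b x) X),
        smult = (\<lambda>c a. restrict (\<lambda>x. c \<odot>\<^bsub>obj V (X - {x})\<^esub> a x) X) \<rparr>),
     mor = (\<lambda>X Y f a. restrict (\<lambda>y.
              if \<exists>x\<in>X. f x = y then
                (let x = (THE x. x \<in> X \<and> f x = y) in
                   mor V (X - {x}) (Y - {y}) (restrict f (X - {x})) (a x))
              else \<zero>\<^bsub>obj V (Y - {y})\<^esub>) Y) \<rparr>"

end

theory Submission imports Defs begin

lemma FI_homI: "f \<in> X \<rightarrow>\<^sub>E Y \<Longrightarrow> inj_on f X \<Longrightarrow> f \<in> FI_hom X Y"
  by (simp add: FI_hom_def)

lemma FI_homD: assumes "f \<in> FI_hom X Y" shows "f \<in> X \<rightarrow>\<^sub>E Y" "inj_on f X"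
  using assms by (auto simp: FI_hom_def)

lemma FI_hom_compose: "f \<in> FI_hom X Y \<Longrightarrow> g \<in> FI_hom Y Z \<Longrightarrow> compose X g f \<in> FI_hom X Z"
  unfolding FI_hom_def compose_def
  by (auto simp: inj_on_def PiE_def Pi_def extensional_def)

lemma finite_FI_hom: "finite X \<Longrightarrow> finite Y \<Longrightarrow> finite (FI_hom X Y)"
  unfolding FI_hom_def by (rule finite_subset[OF _ finite_PiE[of X "\<lambda>_. Y"]]) auto

lemma finite_sigma: "finite X \<Longrightarrow> finite (sigma_obj X)"
  by (simp add: sigma_obj_def)

lemma sigma_mor_hom: assumes "f \<in> FI_hom X Y" shows "sigma_mor X f \<in> FI_hom (sigma_obj X) (sigma_obj Y)"
  using assms unfolding FI_hom_def sigma_mor_def sigma_obj_def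
  by (auto simp: inj_on_def PiE_def Pi_def extensional_def split: if_splits)

lemma sigma_mor_0: "sigma_mor X f 0 = 0"
  by (simp add: sigma_mor_def sigma_obj_def)

lemma sigma_mor_Suc: "z \<in> X \<Longrightarrow> sigma_mor X f (Suc z) = Suc (f z)"
  by (simp add: sigma_mor_def sigma_obj_def)

definition ind :: "('k, 'r) ring_scheme \<Rightarrow> 'b set \<Rightarrow> 'b \<Rightarrow> 'b \<Rightarrow> 'k" where
  "ind R B c = restrict (\<lambda>x. if x = c then \<one>\<^bsub>R\<^esub> else \<zero>\<^bsub>R\<^esub>) B"

definition emb :: "nat set \<Rightarrow> nat \<Rightarrow> nat" where
  "emb X = restrict Suc X"

definition jx :: "nat set \<Rightarrow> nat \<Rightarrow> nat \<Rightarrow> nat" where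
  "jx X x = restrict (\<lambda>z. if z = x then 0 else Suc z) X"

definition dec :: "(nat \<Rightarrow> nat) \<Rightarrow> nat set \<Rightarrow> nat \<Rightarrow> nat" where
  "dec g S = restrict (\<lambda>z. g z - 1) S"

lemma emb_hom: "emb X \<in> FI_hom X (sigma_obj X)"
  unfolding FI_hom_def emb_def sigma_obj_def by (auto simp: inj_on_def)

lemma jx_hom: "x \<in> X \<Longrightarrow> jx X x \<in> FI_hom X (sigma_obj (X - {x}))"
  unfolding FI_hom_def jx_def sigma_obj_def by (auto simp: inj_on_def)

lemma dec_hom_gen: assumes "\<forall>z\<in>S. g z \<in> sigma_obj W" "inj_on g S" "0 \<notin> g ` S"
  shows "dec g S \<in> FI_hom S W"
proof -
  have a: "\<forall>z\<in>S. g z - 1 \<in> W" using assms(1,3) by (force simp: sigma_obj_def)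
  have "inj_on (\<lambda>z. g z - 1) S"
  proof (rule inj_onI)
    fix u v assume "u \<in> S" "v \<in> S" "g u - 1 = g v - 1"
    then have "g u = g v" using assms(3) by (metis One_nat_def Suc_pred image_eqI not_gr0)
    then show "u = v" using assms(2) \<open>u \<in> S\<close> \<open>v \<in> S\<close> by (auto simp: inj_on_def)
  qed
  then show ?thesis using a unfolding FI_hom_def dec_def by (auto simp: inj_on_def)
qed

lemma dec_hom_nz: assumes "g \<in> FI_hom X (sigma_obj W)" "0 \<notin> g ` X"
  shows "dec g X \<in> FI_hom X W"
  using assms by (intro dec_hom_gen) (auto simp: FI_hom_def)

lemma dec_hom_z: assumes "g \<in> FI_hom X (sigma_obj W)" "x \<in> X" "g x = 0"
  shows "dec g (X - {x}) \<in> FI_hom (X - {x}) W"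
  using assms by (intro dec_hom_gen) (auto simp: FI_hom_def inj_on_def)

lemma ind_carrier: assumes "ring R" shows "ind R B c \<in> B \<rightarrow>\<^sub>E carrier R"
  using monoid.one_closed[OF ring.is_monoid[OF assms]] ring.ring_simprules(2)[OF assms] by (auto simp: ind_def)

lemma (in module) finsum_smult_rdistr:
  assumes "finite A" "f \<in> A \<rightarrow> carrier R" "x \<in> carrier M"
  shows "(finsum R f A) \<odot>\<^bsub>M\<^esub> x = (\<Oplus>\<^bsub>M\<^esub> i \<in> A. f i \<odot>\<^bsub>M\<^esub> x)"
  using assms
proof (induct set: finite)
  case empty then show ?case by simp
next
  case (insert a F) then show ?case
    by (simp add: Pi_def smult_l_distr R.finsum_insert M.finsum_insert R.finsum_closed)
qed

lemma (in module) reindex: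
  assumes fin: "finite B" "finite B'" and k: "k \<in> B \<rightarrow> B'" and m: "m \<in> B \<rightarrow> carrier R"
    and v: "val \<in> B' \<rightarrow> carrier M"
  shows "(\<Oplus>\<^bsub>M\<^esub> y \<in> B'. lin_ext R B B' k m y \<odot>\<^bsub>M\<^esub> val y) = (\<Oplus>\<^bsub>M\<^esub> x \<in> B. m x \<odot>\<^bsub>M\<^esub> val (k x))"
proof -
  have "(\<Oplus>\<^bsub>M\<^esub> y \<in> B'. lin_ext R B B' k m y \<odot>\<^bsub>M\<^esub> val y) =
        (\<Oplus>\<^bsub>M\<^esub> y \<in> B'. (\<Oplus>\<^bsub>M\<^esub> x \<in> {x\<in>B. k x = y}. m x \<odot>\<^bsub>M\<^esub> val (k x)))"
  proof (rule M.finsum_cong')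
    fix y assume y: "y \<in> B'"
    have "lin_ext R B B' k m y \<odot>\<^bsub>M\<^esub> val y = (\<Oplus>\<^bsub>M\<^esub> x \<in> {x\<in>B. k x = y}. m x \<odot>\<^bsub>M\<^esub> val y)"
      using y fin m v by (auto simp: lin_ext_def intro!: finsum_smult_rdistr)
    also have "\<dots> = (\<Oplus>\<^bsub>M\<^esub> x \<in> {x\<in>B. k x = y}. m x \<odot>\<^bsub>M\<^esub> val (k x))"
      by (rule M.finsum_cong') (use y m v in auto)
    finally show "lin_ext R B B' k m y \<odot>\<^bsub>M\<^esub> val y = (\<Oplus>\<^bsub>M\<^esub> x \<in> {x\<in>B. k x = y}. m x \<odot>\<^bsub>M\<^esub> val (k x))" .
  next
    show "(\<lambda>y. \<Oplus>\<^bsub>M\<^esub>x\<in>{x \<in> B. k x = y}. m x \<odot>\<^bsub>M\<^esub> val (k x)) \<in> B' \<rightarrow> carrier M"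
      using m v k fin by (auto intro!: M.finsum_closed)
  qed simp
  also have "\<dots> = (\<Oplus>\<^bsub>M\<^esub> x \<in> (\<Union>y\<in>B'. {x\<in>B. k x = y}). m x \<odot>\<^bsub>M\<^esub> val (k x))"
    by (rule M.add.finprod_UN_disjoint[symmetric]) (use fin m v k in \<open>auto simp: pairwise_def disjnt_def\<close>)
  also have "(\<Union>y\<in>B'. {x\<in>B. k x = y}) = B" using k by auto
  finally show ?thesis .
qed

lemma lin_map_zero:
  assumes "module R M" "module R N" "lin_map R M N h"
  shows "h \<zero>\<^bsub>M\<^esub> = \<zero>\<^bsub>N\<^esub>"
proof -
  interpret M: module R M by fact
  interpret N: module R N by fact
  have "h (\<zero>\<^bsub>R\<^esub> \<odot>\<^bsub>M\<^esub> \<zero>\<^bsub>M\<^esub>) = \<zero>\<^bsub>R\<^esub> \<odot>\<^bsub>N\<^esub> h \<zero>\<^bsub>M\<^esub>"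
    using assms(3) unfolding lin_map_def by (meson M.zero_closed M.R.zero_closed)
  moreover have "h \<zero>\<^bsub>M\<^esub> \<in> carrier N" using assms(3) by (auto simp: lin_map_def)
  ultimately show ?thesis by simp
qed

lemma lin_map_finsum:
  assumes "module R M" "module R N" "lin_map R M N h" "finite S" "f \<in> S \<rightarrow> carrier M"
  shows "h (finsum M f S) = finsum N (\<lambda>i. h (f i)) S"
  using assms(4,5)
proof (induct set: finite)
  case empty then show ?case using lin_map_zero[OF assms(1-3)]
    by (simp add: abelian_monoid.finsum_empty module.axioms(2)[OF assms(1)] abelian_group.axioms(1)
        module.axioms(2)[OF assms(2)])
next
  case (insert a F)
  interpret M: module R M by fact
  interpret N: module R N by fact
  have hc: "\<And>x. x \<in> carrier M \<Longrightarrow> h x \<in> carrier N" using assms(3) by (auto simp: lin_map_def)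
  from insert show ?case using assms(3)
    by (simp add: M.finsum_insert N.finsum_insert Pi_def hc lin_map_def M.finsum_closed)
qed

locale FIctx = R?: cring R for R :: "('k, 'r) ring_scheme" +
  fixes V :: "('k, 'v) FImod"
  assumes FV: "FI_module R V"
begin

lemma ind_in: "ind R B c \<in> B \<rightarrow>\<^sub>E carrier R"
  using ind_carrier[OF ring_axioms] .

lemma finsum_ind:
  assumes "finite B" "c \<in> B" "module R M" "f \<in> B \<rightarrow> carrier M"
  shows "finsum M (\<lambda>g. ind R B c g \<odot>\<^bsub>M\<^esub> f g) B = f c"
proof -
  interpret M: module R M by fact
  have "finsum M (\<lambda>g. ind R B c g \<odot>\<^bsub>M\<^esub> f g) B = finsum M (\<lambda>g. if c = g then f g else \<zero>\<^bsub>M\<^esub>) B"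
    by (rule M.finsum_cong') (use assms in \<open>auto simp: ind_def Pi_def M.smult_l_null M.smult_one\<close>)
  also have "\<dots> = f c" by (rule M.finsum_singleton) (use assms in auto)
  finally show ?thesis .
qed

lemma lin_ext_ind:
  assumes "finite B" "c \<in> B" "k \<in> B \<rightarrow> B'"
  shows "lin_ext R B B' k (ind R B c) = ind R B' (k c)"
proof (rule ext)
  fix y
  show "lin_ext R B B' k (ind R B c) y = ind R B' (k c) y"
  proof (cases "y \<in> B'")
    case True
    have "finsum R (ind R B c) {x \<in> B. k x = y} = finsum R (\<lambda>x. if c = x then (if k c = y then \<one>\<^bsub>R\<^esub> else \<zero>\<^bsub>R\<^esub>) else \<zero>\<^bsub>R\<^esub>) {x \<in> B. k x = y}"
      by (rule finsum_cong') (use assms in \<open>auto simp: ind_def\<close>)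
    also have "\<dots> = (if k c = y then \<one>\<^bsub>R\<^esub> else \<zero>\<^bsub>R\<^esub>)"
    proof (cases "k c = y")
      case True
      then show ?thesis using finsum_singleton[of c "{x \<in> B. k x = y}" "\<lambda>_. \<one>\<^bsub>R\<^esub>"] assms by auto
    next
      case False
      then show ?thesis by (auto intro: finsum_zero)
    qed
    finally show ?thesis using True by (simp add: lin_ext_def ind_def)
  qed (simp add: lin_ext_def ind_def)
qed

lemma modV: "finite W \<Longrightarrow> module R (obj V W)"
  using FV by (simp add: FI_module_def)

lemma linV: "finite X \<Longrightarrow> finite Y \<Longrightarrow> f \<in> FI_hom X Y \<Longrightarrow> lin_map R (obj V X) (obj V Y) (mor V X Y f)"
  using FV by (simp add: FI_module_def)

lemma morV_closed: "finite X \<Longrightarrow> finite Y \<Longrightarrow> f \<in> FI_hom X Y \<Longrightarrow> v \<in> carrier (obj V X) \<Longrightarrow> mor V X Y f v \<in> carrier (obj V Y)"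
  using linV[of X Y f] unfolding lin_map_def by blast

lemma morV_add: "finite X \<Longrightarrow> finite Y \<Longrightarrow> f \<in> FI_hom X Y \<Longrightarrow> v \<in> carrier (obj V X) \<Longrightarrow> w \<in> carrier (obj V X) \<Longrightarrow>
   mor V X Y f (v \<oplus>\<^bsub>obj V X\<^esub> w) = mor V X Y f v \<oplus>\<^bsub>obj V Y\<^esub> mor V X Y f w"
  using linV[of X Y f] unfolding lin_map_def by blast

lemma morV_smult: "finite X \<Longrightarrow> finite Y \<Longrightarrow> f \<in> FI_hom X Y \<Longrightarrow> c \<in> carrier R \<Longrightarrow> v \<in> carrier (obj V X) \<Longrightarrow>
   mor V X Y f (c \<odot>\<^bsub>obj V X\<^esub> v) = c \<odot>\<^bsub>obj V Y\<^esub> mor V X Y f v"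
  using linV[of X Y f] unfolding lin_map_def by blast

lemma morV_zero: "finite X \<Longrightarrow> finite Y \<Longrightarrow> f \<in> FI_hom X Y \<Longrightarrow> mor V X Y f \<zero>\<^bsub>obj V X\<^esub> = \<zero>\<^bsub>obj V Y\<^esub>"
  using lin_map_zero[OF modV modV linV] by blast

lemma idV: "finite X \<Longrightarrow> v \<in> carrier (obj V X) \<Longrightarrow> mor V X X (restrict id X) v = v"
  using FV by (simp add: FI_module_def)

lemma compV: "finite X \<Longrightarrow> finite Y \<Longrightarrow> finite Z \<Longrightarrow> f \<in> FI_hom X Y \<Longrightarrow> g \<in> FI_hom Y Z \<Longrightarrow>
   v \<in> carrier (obj V X) \<Longrightarrow> mor V X Z (compose X g f) v = mor V Y Z g (mor V X Y f v)"
  using FV by (simp add: FI_module_def)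


lemma obj_shiftM: "obj (shift (Mrep R X)) W = free_mod R (FI_hom X (sigma_obj W))"
  by (simp add: shift_def Mrep_def)

lemma mor_shiftM: "mor (shift (Mrep R X)) W W' h = lin_ext R (FI_hom X (sigma_obj W)) (FI_hom X (sigma_obj W')) (\<lambda>g. compose X (sigma_mor W h) g)"
  by (simp add: shift_def Mrep_def)

lemma free_simps:
  "carrier (free_mod R B) = B \<rightarrow>\<^sub>E carrier R"
  "zero (free_mod R B) = restrict (\<lambda>_. \<zero>\<^bsub>R\<^esub>) B"
  "add (free_mod R B) a b = restrict (\<lambda>x. a x \<oplus>\<^bsub>R\<^esub> b x) B"
  "smult (free_mod R B) c a = restrict (\<lambda>x. c \<otimes>\<^bsub>R\<^esub> a x) B"
  by (simp_all add: free_mod_def)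

end

definition valf :: "('k, 'v) FImod \<Rightarrow> nat set \<Rightarrow> 'v \<Rightarrow> (nat \<Rightarrow> 'v) \<Rightarrow> nat set \<Rightarrow> (nat \<Rightarrow> nat) \<Rightarrow> 'v" where
  "valf V X v a W g = (if 0 \<notin> g ` X then mor V X W (dec g X) v
     else (let x = (THE x. x \<in> X \<and> g x = 0) in mor V (X - {x}) W (dec g (X - {x})) (a x)))"

definition Psi :: "('k, 'r) ring_scheme \<Rightarrow> ('k, 'v) FImod \<Rightarrow> nat set \<Rightarrow> (nat set \<Rightarrow> (nat \<Rightarrow> nat) \<Rightarrow> 'v)
   \<Rightarrow> nat set \<Rightarrow> ((nat \<Rightarrow> nat) \<Rightarrow> 'k) \<Rightarrow> 'v" where
  "Psi R V X val = (\<lambda>W. if finite W then restrict (\<lambda>m. finsum (obj V W) (\<lambda>g. m g \<odot>\<^bsub>obj V W\<^esub> val W g) (FI_hom X (sigma_obj W)))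
        (FI_hom X (sigma_obj W) \<rightarrow>\<^sub>E carrier R) else undefined)"

lemma valf_nz: "0 \<notin> g ` X \<Longrightarrow> valf V X v a W g = mor V X W (dec g X) v"
  by (simp add: valf_def)

lemma valf_z: assumes "g \<in> FI_hom X Y" "x \<in> X" "g x = 0"
  shows "valf V X v a W g = mor V (X - {x}) W (dec g (X - {x})) (a x)"
proof -
  have "(THE x. x \<in> X \<and> g x = 0) = x"
    using assms by (intro the_equality) (auto simp: FI_hom_def inj_on_def)
  moreover have "0 \<in> g ` X" using assms by force
  ultimately show ?thesis by (simp add: valf_def Let_def)
qed

lemma Psi_apply: "finite W \<Longrightarrow> m \<in> FI_hom X (sigma_obj W) \<rightarrow>\<^sub>E carrier R \<Longrightarrow>
   Psi R V X val W m = finsum (obj V W) (\<lambda>g. m g \<odot>\<^bsub>obj V W\<^esub> val W g) (FI_hom X (sigma_obj W))"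
  by (simp add: Psi_def)


context FIctx begin

lemma Psi_hom:
  assumes finX: "finite X"
    and vc: "\<And>W g. finite W \<Longrightarrow> g \<in> FI_hom X (sigma_obj W) \<Longrightarrow> val W g \<in> carrier (obj V W)"
    and vn: "\<And>W W' h g. finite W \<Longrightarrow> finite W' \<Longrightarrow> h \<in> FI_hom W W' \<Longrightarrow> g \<in> FI_hom X (sigma_obj W) \<Longrightarrow>
               val W' (compose X (sigma_mor W h) g) = mor V W W' h (val W g)"
  shows "Psi R V X val \<in> Hom_carrier R (shift (Mrep R X)) V"
proof -
  have lin: "lin_map R (obj (shift (Mrep R X)) W) (obj V W) (Psi R V X val W)" if fW: "finite W" for W
  proof -
    interpret M: module R "obj V W" using modV[OF fW] .
    let ?B = "FI_hom X (sigma_obj W)"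
    have fB: "finite ?B" by (simp add: finite_FI_hom finX finite_sigma fW)
    have cl: "Psi R V X val W m \<in> carrier (obj V W)" if "m \<in> ?B \<rightarrow>\<^sub>E carrier R" for m
      using that vc[OF fW] by (auto simp: Psi_apply[OF fW] intro!: M.finsum_closed)
    show ?thesis unfolding lin_map_def obj_shiftM free_simps
    proof (intro conjI ballI)
      show "Psi R V X val W \<in> (?B \<rightarrow>\<^sub>E carrier R) \<rightarrow> carrier (obj V W)" using cl by auto
    next
      fix x y assume x: "x \<in> ?B \<rightarrow>\<^sub>E carrier R" and y: "y \<in> ?B \<rightarrow>\<^sub>E carrier R"
      have xy: "restrict (\<lambda>g. x g \<oplus>\<^bsub>R\<^esub> y g) ?B \<in> ?B \<rightarrow>\<^sub>E carrier R" using x y by auto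
      have "Psi R V X val W (restrict (\<lambda>g. x g \<oplus>\<^bsub>R\<^esub> y g) ?B)
          = finsum (obj V W) (\<lambda>g. x g \<odot>\<^bsub>obj V W\<^esub> val W g \<oplus>\<^bsub>obj V W\<^esub> y g \<odot>\<^bsub>obj V W\<^esub> val W g) ?B"
        unfolding Psi_apply[OF fW xy]
        by (rule M.finsum_cong') (use x y vc[OF fW] in \<open>auto simp: M.smult_l_distr PiE_iff\<close>)
      also have "\<dots> = Psi R V X val W x \<oplus>\<^bsub>obj V W\<^esub> Psi R V X val W y"
        unfolding Psi_apply[OF fW x] Psi_apply[OF fW y]
        by (rule M.finsum_addf) (use x y vc[OF fW] in \<open>auto simp: PiE_iff\<close>)
      finally show "Psi R V X val W (restrict (\<lambda>g. x g \<oplus>\<^bsub>R\<^esub> y g) ?B) = Psi R V X val W x \<oplus>\<^bsub>obj V W\<^esub> Psi R V X val W y" .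
    next
      fix c x assume c: "c \<in> carrier R" and x: "x \<in> ?B \<rightarrow>\<^sub>E carrier R"
      have cx: "restrict (\<lambda>g. c \<otimes>\<^bsub>R\<^esub> x g) ?B \<in> ?B \<rightarrow>\<^sub>E carrier R" using x c by auto
      have "Psi R V X val W (restrict (\<lambda>g. c \<otimes>\<^bsub>R\<^esub> x g) ?B)
          = finsum (obj V W) (\<lambda>g. c \<odot>\<^bsub>obj V W\<^esub> (x g \<odot>\<^bsub>obj V W\<^esub> val W g)) ?B"
        unfolding Psi_apply[OF fW cx]
        by (rule M.finsum_cong') (use x c vc[OF fW] in \<open>auto simp: M.smult_assoc1 PiE_iff\<close>)
      also have "\<dots> = c \<odot>\<^bsub>obj V W\<^esub> Psi R V X val W x"
        unfolding Psi_apply[OF fW x]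
        by (rule M.finsum_smult_ldistr[symmetric]) (use x c vc[OF fW] fB in \<open>auto simp: PiE_iff\<close>)
      finally show "Psi R V X val W (restrict (\<lambda>g. c \<otimes>\<^bsub>R\<^esub> x g) ?B) = c \<odot>\<^bsub>obj V W\<^esub> Psi R V X val W x" .
    qed
  qed
  have nat: "Psi R V X val W' (mor (shift (Mrep R X)) W W' h m) = mor V W W' h (Psi R V X val W m)"
    if fW: "finite W" and fW': "finite W'" and h: "h \<in> FI_hom W W'" and m: "m \<in> carrier (obj (shift (Mrep R X)) W)" for W W' h m
  proof -
    interpret M: module R "obj V W" using modV[OF fW] .
    interpret M': module R "obj V W'" using modV[OF fW'] .
    let ?B = "FI_hom X (sigma_obj W)" and ?B' = "FI_hom X (sigma_obj W')"
    let ?k = "\<lambda>g. compose X (sigma_mor W h) g"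
    have fB: "finite ?B" "finite ?B'" by (simp_all add: finite_FI_hom finX finite_sigma fW fW')
    have m': "m \<in> ?B \<rightarrow>\<^sub>E carrier R" using m by (simp add: obj_shiftM free_simps)
    have k: "?k \<in> ?B \<rightarrow> ?B'" using FI_hom_compose sigma_mor_hom[OF h] by blast
    have le: "lin_ext R ?B ?B' ?k m \<in> ?B' \<rightarrow>\<^sub>E carrier R"
      using m' by (auto simp: lin_ext_def intro!: finsum_closed)
    have "Psi R V X val W' (mor (shift (Mrep R X)) W W' h m)
        = finsum (obj V W') (\<lambda>y. lin_ext R ?B ?B' ?k m y \<odot>\<^bsub>obj V W'\<^esub> val W' y) ?B'"
      unfolding mor_shiftM Psi_apply[OF fW' le] ..
    also have "\<dots> = finsum (obj V W') (\<lambda>x. m x \<odot>\<^bsub>obj V W'\<^esub> val W' (?k x)) ?B"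
      by (rule M'.reindex) (use fB k m' vc[OF fW'] in \<open>auto simp: PiE_iff\<close>)
    also have "\<dots> = finsum (obj V W') (\<lambda>x. mor V W W' h (m x \<odot>\<^bsub>obj V W\<^esub> val W x)) ?B"
      by (rule M'.finsum_cong') (use m' vc[OF fW] vn[OF fW fW' h] morV_smult[OF fW fW' h] morV_closed[OF fW fW' h] in \<open>auto simp: PiE_iff\<close>)
    also have "\<dots> = mor V W W' h (Psi R V X val W m)"
      unfolding Psi_apply[OF fW m']
      by (rule lin_map_finsum[symmetric, OF modV[OF fW] modV[OF fW'] linV[OF fW fW' h] fB(1)])
         (use m' vc[OF fW] in \<open>auto simp: PiE_iff\<close>)
    finally show ?thesis .
  qed
  show ?thesis
    unfolding Hom_carrier_def FI_morphism_def
    using lin nat by (auto simp: Psi_def obj_shiftM free_simps)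
qed

end


context FIctx begin

lemma lin_free:
  assumes fB: "finite B" and N: "module R N" and h: "lin_map R (free_mod R B) N h"
    and m: "m \<in> B \<rightarrow>\<^sub>E carrier R"
  shows "h m = finsum N (\<lambda>g. m g \<odot>\<^bsub>N\<^esub> h (ind R B g)) B"
proof -
  interpret N: module R N by fact
  have hc: "\<And>x. x \<in> B \<rightarrow>\<^sub>E carrier R \<Longrightarrow> h x \<in> carrier N"
    using h by (auto simp: lin_map_def free_simps)
  have hadd: "\<And>x y. x \<in> B \<rightarrow>\<^sub>E carrier R \<Longrightarrow> y \<in> B \<rightarrow>\<^sub>E carrier R \<Longrightarrow>
      h (restrict (\<lambda>g. x g \<oplus>\<^bsub>R\<^esub> y g) B) = h x \<oplus>\<^bsub>N\<^esub> h y"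
    using h unfolding lin_map_def free_simps by blast
  have hsm: "\<And>c x. c \<in> carrier R \<Longrightarrow> x \<in> B \<rightarrow>\<^sub>E carrier R \<Longrightarrow>
      h (restrict (\<lambda>g. c \<otimes>\<^bsub>R\<^esub> x g) B) = c \<odot>\<^bsub>N\<^esub> h x"
    using h unfolding lin_map_def free_simps by blast
  have indc: "\<And>g. ind R B g \<in> B \<rightarrow>\<^sub>E carrier R" by (rule ind_in)
  have main: "S \<subseteq> B \<Longrightarrow> h (restrict (\<lambda>x. if x \<in> S then m x else \<zero>\<^bsub>R\<^esub>) B)
       = finsum N (\<lambda>g. m g \<odot>\<^bsub>N\<^esub> h (ind R B g)) S" if "finite S" for S
    using that
  proof (induct S rule: finite_induct)
    case empty
    have z: "restrict (\<lambda>x. \<zero>\<^bsub>R\<^esub>) B \<in> B \<rightarrow>\<^sub>E carrier R" by auto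
    have "h (restrict (\<lambda>g. \<zero>\<^bsub>R\<^esub> \<otimes>\<^bsub>R\<^esub> restrict (\<lambda>x. \<zero>\<^bsub>R\<^esub>) B g) B) = \<zero>\<^bsub>R\<^esub> \<odot>\<^bsub>N\<^esub> h (restrict (\<lambda>x. \<zero>\<^bsub>R\<^esub>) B)"
      by (rule hsm[OF zero_closed z])
    moreover have "restrict (\<lambda>g. \<zero>\<^bsub>R\<^esub> \<otimes>\<^bsub>R\<^esub> restrict (\<lambda>x. \<zero>\<^bsub>R\<^esub>) B g) B = restrict (\<lambda>x. \<zero>\<^bsub>R\<^esub>) B"
      by (auto simp: restrict_def)
    ultimately have "h (restrict (\<lambda>x. \<zero>\<^bsub>R\<^esub>) B) = \<zero>\<^bsub>N\<^esub>" using hc[OF z] by simp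
    moreover have "restrict (\<lambda>x. if x \<in> {} then m x else \<zero>\<^bsub>R\<^esub>) B = restrict (\<lambda>x. \<zero>\<^bsub>R\<^esub>) B" by simp
    ultimately show ?case by (simp add: restrict_def)
  next
    case (insert a S)
    let ?p = "restrict (\<lambda>x. if x \<in> S then m x else \<zero>\<^bsub>R\<^esub>) B"
    have a: "a \<in> B" and SB: "S \<subseteq> B" using insert by auto
    have pc: "?p \<in> B \<rightarrow>\<^sub>E carrier R" using m by (auto simp: PiE_iff)
    have ma: "m a \<in> carrier R" using m a by auto
    have qc: "restrict (\<lambda>g. m a \<otimes>\<^bsub>R\<^esub> ind R B a g) B \<in> B \<rightarrow>\<^sub>E carrier R"
      using ma indc[of a] by (auto simp: PiE_iff)
    have eq: "restrict (\<lambda>x. if x \<in> insert a S then m x else \<zero>\<^bsub>R\<^esub>) B =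
        restrict (\<lambda>g. ?p g \<oplus>\<^bsub>R\<^esub> restrict (\<lambda>g. m a \<otimes>\<^bsub>R\<^esub> ind R B a g) B g) B"
      using m insert(2) ma a by (auto simp: ind_def PiE_iff restrict_def fun_eq_iff r_null r_one l_zero r_zero)
    have "h (restrict (\<lambda>x. if x \<in> insert a S then m x else \<zero>\<^bsub>R\<^esub>) B)
       = h ?p \<oplus>\<^bsub>N\<^esub> m a \<odot>\<^bsub>N\<^esub> h (ind R B a)"
      unfolding eq hadd[OF pc qc] hsm[OF ma indc] ..
    also have "\<dots> = finsum N (\<lambda>g. m g \<odot>\<^bsub>N\<^esub> h (ind R B g)) S \<oplus>\<^bsub>N\<^esub> m a \<odot>\<^bsub>N\<^esub> h (ind R B a)"
    proof -
      have IH: "h ?p = finsum N (\<lambda>g. m g \<odot>\<^bsub>N\<^esub> h (ind R B g)) S" using insert.hyps(3) SB by blast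
      show ?thesis by (simp only: IH)
    qed
    also have "\<dots> = m a \<odot>\<^bsub>N\<^esub> h (ind R B a) \<oplus>\<^bsub>N\<^esub> finsum N (\<lambda>g. m g \<odot>\<^bsub>N\<^esub> h (ind R B g)) S"
      using insert m hc[OF indc] SB
      by (intro N.a_comm) (auto simp: PiE_iff Pi_def intro!: N.finsum_closed)
    also have "\<dots> = finsum N (\<lambda>g. m g \<odot>\<^bsub>N\<^esub> h (ind R B g)) (insert a S)"
      using insert m hc[OF indc] SB
      by (intro N.finsum_insert[symmetric]) (auto simp: PiE_iff Pi_def)
    finally show ?case .
  qed
  have "restrict (\<lambda>x. if x \<in> B then m x else \<zero>\<^bsub>R\<^esub>) B = m" using m by (auto simp: PiE_iff restrict_def fun_eq_iff extensional_def)
  then show ?thesis using main[OF fB] by simp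
qed

end


context FIctx begin

lemma Hom_carrierD:
  assumes "\<phi> \<in> Hom_carrier R (shift (Mrep R X)) V"
  shows "\<And>W. finite W \<Longrightarrow> lin_map R (free_mod R (FI_hom X (sigma_obj W))) (obj V W) (\<phi> W)"
    and "\<And>W W' h m. finite W \<Longrightarrow> finite W' \<Longrightarrow> h \<in> FI_hom W W' \<Longrightarrow> m \<in> FI_hom X (sigma_obj W) \<rightarrow>\<^sub>E carrier R \<Longrightarrow>
        \<phi> W' (lin_ext R (FI_hom X (sigma_obj W)) (FI_hom X (sigma_obj W')) (\<lambda>g. compose X (sigma_mor W h) g) m)
        = mor V W W' h (\<phi> W m)"
    and "\<And>W. \<not> finite W \<Longrightarrow> \<phi> W = undefined"
    and "\<And>W. finite W \<Longrightarrow> \<phi> W \<in> extensional (FI_hom X (sigma_obj W) \<rightarrow>\<^sub>E carrier R)"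
  using assms unfolding Hom_carrier_def FI_morphism_def obj_shiftM mor_shiftM free_simps by auto

lemma Hom_closed:
  assumes "\<phi> \<in> Hom_carrier R (shift (Mrep R X)) V" "finite W" "m \<in> FI_hom X (sigma_obj W) \<rightarrow>\<^sub>E carrier R"
  shows "\<phi> W m \<in> carrier (obj V W)"
  using Hom_carrierD(1)[OF assms(1,2)] assms(3) unfolding lin_map_def free_simps by blast

lemma Psi_eval:
  assumes "finite X" "finite W" "c \<in> FI_hom X (sigma_obj W)"
    and vc: "\<And>g. g \<in> FI_hom X (sigma_obj W) \<Longrightarrow> val W g \<in> carrier (obj V W)"
  shows "Psi R V X val W (ind R (FI_hom X (sigma_obj W)) c) = val W c"
  unfolding Psi_apply[OF assms(2) ind_in]
  by (rule finsum_ind) (use assms modV finite_FI_hom finite_sigma in auto)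

lemma Psi_cong:
  assumes "finite X"
    and vc: "\<And>W g. finite W \<Longrightarrow> g \<in> FI_hom X (sigma_obj W) \<Longrightarrow> val' W g \<in> carrier (obj V W)"
    and eq: "\<And>W g. finite W \<Longrightarrow> g \<in> FI_hom X (sigma_obj W) \<Longrightarrow> val W g = val' W g"
  shows "Psi R V X val = Psi R V X val'"
proof (rule ext)
  fix W
  show "Psi R V X val W = Psi R V X val' W"
  proof (cases "finite W")
    case True
    interpret M: module R "obj V W" using modV[OF True] .
    show ?thesis unfolding Psi_def using True
      by (auto intro!: restrict_ext M.finsum_cong' simp: eq vc PiE_iff)
  qed (simp add: Psi_def)
qed

lemma yoneda:
  assumes fX: "finite X" and phi: "\<phi> \<in> Hom_carrier R (shift (Mrep R X)) V"
  shows "\<phi> = Psi R V X (\<lambda>W g. \<phi> W (ind R (FI_hom X (sigma_obj W)) g))"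
proof (rule ext)
  fix W
  show "\<phi> W = Psi R V X (\<lambda>W g. \<phi> W (ind R (FI_hom X (sigma_obj W)) g)) W"
  proof (cases "finite W")
    case True
    have e: "\<phi> W \<in> extensional (FI_hom X (sigma_obj W) \<rightarrow>\<^sub>E carrier R)" using Hom_carrierD(4)[OF phi True] .
    show ?thesis
    proof (rule extensionalityI[OF e])
      show "Psi R V X (\<lambda>W g. \<phi> W (ind R (FI_hom X (sigma_obj W)) g)) W \<in> extensional (FI_hom X (sigma_obj W) \<rightarrow>\<^sub>E carrier R)"
        using True by (simp add: Psi_def)
    next
      fix m assume m: "m \<in> FI_hom X (sigma_obj W) \<rightarrow>\<^sub>E carrier R"
      show "\<phi> W m = Psi R V X (\<lambda>W g. \<phi> W (ind R (FI_hom X (sigma_obj W)) g)) W m"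
        unfolding Psi_apply[OF True m]
        by (rule lin_free[OF _ modV[OF True] Hom_carrierD(1)[OF phi True] m])
           (simp add: finite_FI_hom fX finite_sigma True)
    qed
  qed (simp add: Psi_def Hom_carrierD(3)[OF phi])
qed

lemma Psi_pull:
  assumes fX: "finite X" and fY: "finite Y" and f: "f \<in> FI_hom X Y"
    and vc: "\<And>W g. finite W \<Longrightarrow> g \<in> FI_hom X (sigma_obj W) \<Longrightarrow> val W g \<in> carrier (obj V W)"
  shows "mor (coind R V) X Y f (Psi R V X val) = Psi R V Y (\<lambda>W k. val W (compose X k f))"
proof (rule ext)
  fix W
  show "mor (coind R V) X Y f (Psi R V X val) W = Psi R V Y (\<lambda>W k. val W (compose X k f)) W"
  proof (cases "finite W")
    case True
    interpret M: module R "obj V W" using modV[OF True] .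
    let ?B = "FI_hom X (sigma_obj W)" and ?C = "FI_hom Y (sigma_obj W)"
    have fin: "finite ?B" "finite ?C" by (simp_all add: finite_FI_hom fX fY finite_sigma True)
    have k: "(\<lambda>g. compose X g f) \<in> ?C \<rightarrow> ?B" using FI_hom_compose[OF f] by blast
    have "restrict (\<lambda>m. Psi R V X val W (rho R X Y f (sigma_obj W) m)) (?C \<rightarrow>\<^sub>E carrier R)
        = restrict (\<lambda>m. finsum (obj V W) (\<lambda>g. m g \<odot>\<^bsub>obj V W\<^esub> val W (compose X g f)) ?C) (?C \<rightarrow>\<^sub>E carrier R)"
    proof (rule restrict_ext)
      fix m assume m: "m \<in> ?C \<rightarrow>\<^sub>E carrier R"
      have le: "rho R X Y f (sigma_obj W) m \<in> ?B \<rightarrow>\<^sub>E carrier R"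
        using m by (auto simp: rho_def lin_ext_def PiE_iff intro!: finsum_closed)
      show "Psi R V X val W (rho R X Y f (sigma_obj W) m) = finsum (obj V W) (\<lambda>g. m g \<odot>\<^bsub>obj V W\<^esub> val W (compose X g f)) ?C"
        unfolding rho_def Psi_apply[OF True le[unfolded rho_def]]
        by (rule M.reindex) (use fin k m vc[OF True] in \<open>auto simp: PiE_iff\<close>)
    qed
    then show ?thesis using True by (simp add: coind_def Psi_def obj_shiftM free_simps)
  qed (simp add: coind_def Psi_def)
qed

end


lemma sigma_mor_nz: assumes "g \<in> FI_hom X (sigma_obj W)" "z \<in> X" "g z \<noteq> 0"
  shows "sigma_mor W h (g z) = Suc (h (g z - 1))" "g z - 1 \<in> W"
proof -
  have "g z \<in> sigma_obj W" using assms by (auto simp: FI_hom_def)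
  then obtain w where w: "g z = Suc w" "w \<in> W" using assms(3) by (auto simp: sigma_obj_def)
  then show "sigma_mor W h (g z) = Suc (h (g z - 1))" "g z - 1 \<in> W" by (simp_all add: sigma_mor_Suc)
qed

context FIctx begin

lemma valf_closed:
  assumes fX: "finite X" and fW: "finite W" and v: "v \<in> carrier (obj V X)"
    and a: "\<And>x. x \<in> X \<Longrightarrow> a x \<in> carrier (obj V (X - {x}))"
    and g: "g \<in> FI_hom X (sigma_obj W)"
  shows "valf V X v a W g \<in> carrier (obj V W)"
proof (cases "0 \<in> g ` X")
  case True
  then obtain x where x: "x \<in> X" "g x = 0" by auto
  show ?thesis unfolding valf_z[OF g x]
    by (rule morV_closed) (use fX fW dec_hom_z[OF g x] a[OF x(1)] in auto)
next
  case False
  show ?thesis unfolding valf_nz[OF False]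
    by (rule morV_closed) (use fX fW dec_hom_nz[OF g False] v in auto)
qed

lemma valf_nat:
  assumes fX: "finite X" and fW: "finite W" and fW': "finite W'" and v: "v \<in> carrier (obj V X)"
    and a: "\<And>x. x \<in> X \<Longrightarrow> a x \<in> carrier (obj V (X - {x}))"
    and h: "h \<in> FI_hom W W'" and g: "g \<in> FI_hom X (sigma_obj W)"
  shows "valf V X v a W' (compose X (sigma_mor W h) g) = mor V W W' h (valf V X v a W g)"
proof -
  let ?g' = "compose X (sigma_mor W h) g"
  have g': "?g' \<in> FI_hom X (sigma_obj W')" using FI_hom_compose[OF g sigma_mor_hom[OF h]] .
  have gz: "?g' z = Suc (h (g z - 1))" if "z \<in> X" "g z \<noteq> 0" for z
  proof -
    have "?g' z = sigma_mor W h (g z)" using that(1) by (simp add: compose_def)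
    then show ?thesis using sigma_mor_nz(1)[OF g that] by simp
  qed
  show ?thesis
  proof (cases "0 \<in> g ` X")
    case True
    then obtain x where x: "x \<in> X" "g x = 0" by auto
    have x': "?g' x = 0" using x by (simp add: compose_def sigma_mor_0)
    have d: "dec ?g' (X - {x}) = compose (X - {x}) h (dec g (X - {x}))"
    proof (rule ext)
      fix z show "dec ?g' (X - {x}) z = compose (X - {x}) h (dec g (X - {x})) z"
      proof (cases "z \<in> X - {x}")
        case True
        then have "g z \<noteq> g x" using x inj_onD[OF FI_homD(2)[OF g]] by blast
        then have "g z \<noteq> 0" using x by simp
        then have "?g' z = Suc (h (g z - 1))" using True gz by auto
        then show ?thesis using True by (simp add: dec_def compose_def)
      qed (auto simp: dec_def compose_def)
    qed
    show ?thesis unfolding valf_z[OF g' x(1) x'] valf_z[OF g x] d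
      using compV[OF _ fW fW' dec_hom_z[OF g x] h a[OF x(1)]] fX by simp
  next
    case False
    have F': "0 \<notin> ?g' ` X"
    proof
      assume "0 \<in> ?g' ` X"
      then obtain z where z: "z \<in> X" "?g' z = 0" by (metis imageE)
      have "g z \<noteq> 0" using False z(1) by (metis image_eqI)
      then show False using gz[OF z(1)] z(2) by simp
    qed
    have d: "dec ?g' X = compose X h (dec g X)"
    proof (rule ext)
      fix z show "dec ?g' X z = compose X h (dec g X) z"
      proof (cases "z \<in> X")
        case True
        then have "g z \<noteq> 0" using False by (metis image_eqI)
        then have "?g' z = Suc (h (g z - 1))" using True gz by auto
        then show ?thesis using True by (simp add: dec_def compose_def)
      qed (simp add: dec_def compose_def)
    qed
    show ?thesis unfolding valf_nz[OF False] valf_nz[OF F'] d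
      using compV[OF fX fW fW' dec_hom_nz[OF g False] h v] by simp
  qed
qed

lemma valf_hom:
  assumes fX: "finite X" and v: "v \<in> carrier (obj V X)"
    and a: "\<And>x. x \<in> X \<Longrightarrow> a x \<in> carrier (obj V (X - {x}))"
  shows "Psi R V X (valf V X v a) \<in> Hom_carrier R (shift (Mrep R X)) V"
proof (rule Psi_hom[OF fX])
  fix W g assume "finite W" "g \<in> FI_hom X (sigma_obj W)"
  then show "valf V X v a W g \<in> carrier (obj V W)" using valf_closed[OF fX _ v a] by blast
next
  fix W W' h g assume "finite W" "finite W'" "h \<in> FI_hom W W'" "g \<in> FI_hom X (sigma_obj W)"
  then show "valf V X v a W' (compose X (sigma_mor W h) g) = mor V W W' h (valf V X v a W g)"
    using valf_nat[OF fX _ _ v a] by blast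
qed

end


lemma Hom_mod_simps:
  "carrier (Hom_mod R A V) = Hom_carrier R A V"
  "add (Hom_mod R A V) \<phi> \<psi> = (\<lambda>Y. if finite Y then restrict (\<lambda>m. \<phi> Y m \<oplus>\<^bsub>obj V Y\<^esub> \<psi> Y m) (carrier (obj A Y)) else undefined)"
  "smult (Hom_mod R A V) c \<phi> = (\<lambda>Y. if finite Y then restrict (\<lambda>m. c \<odot>\<^bsub>obj V Y\<^esub> \<phi> Y m) (carrier (obj A Y)) else undefined)"
  "zero (Hom_mod R A V) = (\<lambda>Y. if finite Y then restrict (\<lambda>m. \<zero>\<^bsub>obj V Y\<^esub>) (carrier (obj A Y)) else undefined)"
  by (simp_all add: Hom_mod_def)

lemma coind_obj: "obj (coind R V) X = Hom_mod R (shift (Mrep R X)) V"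
  by (simp add: coind_def)

lemma negshift_simps:
  "carrier (obj (negshift V) X) = (\<Pi>\<^sub>E x\<in>X. carrier (obj V (X - {x})))"
  "add (obj (negshift V) X) a b = restrict (\<lambda>x. a x \<oplus>\<^bsub>obj V (X - {x})\<^esub> b x) X"
  "smult (obj (negshift V) X) c a = restrict (\<lambda>x. c \<odot>\<^bsub>obj V (X - {x})\<^esub> a x) X"
  "zero (obj (negshift V) X) = restrict (\<lambda>x. \<zero>\<^bsub>obj V (X - {x})\<^esub>) X"
  by (simp_all add: negshift_def)

context FIctx begin

lemma Psi_add:
  assumes fX: "finite X"
    and v1: "\<And>W g. finite W \<Longrightarrow> g \<in> FI_hom X (sigma_obj W) \<Longrightarrow> val1 W g \<in> carrier (obj V W)"
    and v2: "\<And>W g. finite W \<Longrightarrow> g \<in> FI_hom X (sigma_obj W) \<Longrightarrow> val2 W g \<in> carrier (obj V W)"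
  shows "add (Hom_mod R (shift (Mrep R X)) V) (Psi R V X val1) (Psi R V X val2)
       = Psi R V X (\<lambda>W g. val1 W g \<oplus>\<^bsub>obj V W\<^esub> val2 W g)"
proof (rule ext)
  fix W
  show "add (Hom_mod R (shift (Mrep R X)) V) (Psi R V X val1) (Psi R V X val2) W
       = Psi R V X (\<lambda>W g. val1 W g \<oplus>\<^bsub>obj V W\<^esub> val2 W g) W"
  proof (cases "finite W")
    case True
    interpret M: module R "obj V W" using modV[OF True] .
    let ?B = "FI_hom X (sigma_obj W)"
    have "restrict (\<lambda>m. Psi R V X val1 W m \<oplus>\<^bsub>obj V W\<^esub> Psi R V X val2 W m) (?B \<rightarrow>\<^sub>E carrier R)
       = restrict (\<lambda>m. finsum (obj V W) (\<lambda>g. m g \<odot>\<^bsub>obj V W\<^esub> (val1 W g \<oplus>\<^bsub>obj V W\<^esub> val2 W g)) ?B) (?B \<rightarrow>\<^sub>E carrier R)"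
    proof (rule restrict_ext)
      fix m assume m: "m \<in> ?B \<rightarrow>\<^sub>E carrier R"
      have "Psi R V X val1 W m \<oplus>\<^bsub>obj V W\<^esub> Psi R V X val2 W m
         = finsum (obj V W) (\<lambda>g. m g \<odot>\<^bsub>obj V W\<^esub> val1 W g \<oplus>\<^bsub>obj V W\<^esub> m g \<odot>\<^bsub>obj V W\<^esub> val2 W g) ?B"
        unfolding Psi_apply[OF True m]
        by (rule M.finsum_addf[symmetric]) (use m v1[OF True] v2[OF True] in \<open>auto simp: PiE_iff\<close>)
      also have "\<dots> = finsum (obj V W) (\<lambda>g. m g \<odot>\<^bsub>obj V W\<^esub> (val1 W g \<oplus>\<^bsub>obj V W\<^esub> val2 W g)) ?B"
        by (rule M.finsum_cong') (use m v1[OF True] v2[OF True] in \<open>auto simp: PiE_iff M.smult_r_distr\<close>)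
      finally show "Psi R V X val1 W m \<oplus>\<^bsub>obj V W\<^esub> Psi R V X val2 W m
         = finsum (obj V W) (\<lambda>g. m g \<odot>\<^bsub>obj V W\<^esub> (val1 W g \<oplus>\<^bsub>obj V W\<^esub> val2 W g)) ?B" .
    qed
    then show ?thesis using True by (simp add: Hom_mod_simps obj_shiftM free_simps Psi_def)
  qed (simp add: Hom_mod_simps Psi_def)
qed

lemma Psi_smult:
  assumes fX: "finite X" and c: "c \<in> carrier R"
    and v1: "\<And>W g. finite W \<Longrightarrow> g \<in> FI_hom X (sigma_obj W) \<Longrightarrow> val1 W g \<in> carrier (obj V W)"
  shows "smult (Hom_mod R (shift (Mrep R X)) V) c (Psi R V X val1)
       = Psi R V X (\<lambda>W g. c \<odot>\<^bsub>obj V W\<^esub> val1 W g)"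
proof (rule ext)
  fix W
  show "smult (Hom_mod R (shift (Mrep R X)) V) c (Psi R V X val1) W
       = Psi R V X (\<lambda>W g. c \<odot>\<^bsub>obj V W\<^esub> val1 W g) W"
  proof (cases "finite W")
    case True
    interpret M: module R "obj V W" using modV[OF True] .
    let ?B = "FI_hom X (sigma_obj W)"
    have fB: "finite ?B" by (simp add: finite_FI_hom fX finite_sigma True)
    have "restrict (\<lambda>m. c \<odot>\<^bsub>obj V W\<^esub> Psi R V X val1 W m) (?B \<rightarrow>\<^sub>E carrier R)
       = restrict (\<lambda>m. finsum (obj V W) (\<lambda>g. m g \<odot>\<^bsub>obj V W\<^esub> (c \<odot>\<^bsub>obj V W\<^esub> val1 W g)) ?B) (?B \<rightarrow>\<^sub>E carrier R)"
    proof (rule restrict_ext)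
      fix m assume m: "m \<in> ?B \<rightarrow>\<^sub>E carrier R"
      have "c \<odot>\<^bsub>obj V W\<^esub> Psi R V X val1 W m
         = finsum (obj V W) (\<lambda>g. c \<odot>\<^bsub>obj V W\<^esub> (m g \<odot>\<^bsub>obj V W\<^esub> val1 W g)) ?B"
        unfolding Psi_apply[OF True m]
        by (rule M.finsum_smult_ldistr) (use m v1[OF True] c fB in \<open>auto simp: PiE_iff\<close>)
      also have "\<dots> = finsum (obj V W) (\<lambda>g. m g \<odot>\<^bsub>obj V W\<^esub> (c \<odot>\<^bsub>obj V W\<^esub> val1 W g)) ?B"
      proof (rule M.finsum_cong')
        fix g assume g: "g \<in> ?B"
        then have mg: "m g \<in> carrier R" using m by auto
        show "c \<odot>\<^bsub>obj V W\<^esub> (m g \<odot>\<^bsub>obj V W\<^esub> val1 W g) = m g \<odot>\<^bsub>obj V W\<^esub> (c \<odot>\<^bsub>obj V W\<^esub> val1 W g)"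
          using mg c v1[OF True g] by (simp add: M.smult_assoc1[symmetric] m_comm)
      qed (use m v1[OF True] c in \<open>auto simp: PiE_iff\<close>)
      finally show "c \<odot>\<^bsub>obj V W\<^esub> Psi R V X val1 W m
         = finsum (obj V W) (\<lambda>g. m g \<odot>\<^bsub>obj V W\<^esub> (c \<odot>\<^bsub>obj V W\<^esub> val1 W g)) ?B" .
    qed
    then show ?thesis using True by (simp add: Hom_mod_simps obj_shiftM free_simps Psi_def)
  qed (simp add: Hom_mod_simps Psi_def)
qed

end


definition piX :: "('k, 'r) ring_scheme \<Rightarrow> nat set \<Rightarrow> (nat set \<Rightarrow> ((nat \<Rightarrow> nat) \<Rightarrow> 'k) \<Rightarrow> 'v) \<Rightarrow> 'v" where
  "piX R X \<phi> = \<phi> X (ind R (FI_hom X (sigma_obj X)) (emb X))"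

definition aphi :: "('k, 'r) ring_scheme \<Rightarrow> nat set \<Rightarrow> (nat set \<Rightarrow> ((nat \<Rightarrow> nat) \<Rightarrow> 'k) \<Rightarrow> 'v) \<Rightarrow> nat \<Rightarrow> 'v" where
  "aphi R X \<phi> = restrict (\<lambda>x. \<phi> (X - {x}) (ind R (FI_hom X (sigma_obj (X - {x}))) (jx X x))) X"

lemma emb_nz: "0 \<notin> emb X ` X" by (auto simp: emb_def)

lemma dec_emb: "dec (emb X) X = restrict id X"
  by (auto simp: dec_def emb_def fun_eq_iff)

lemma jx_x: "x \<in> X \<Longrightarrow> jx X x x = 0" by (simp add: jx_def)

lemma dec_jx: "dec (jx X x) (X - {x}) = restrict id (X - {x})"
  by (auto simp: dec_def jx_def fun_eq_iff)

context FIctx begin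

lemma valf_emb: "finite X \<Longrightarrow> v \<in> carrier (obj V X) \<Longrightarrow> valf V X v a X (emb X) = v"
  by (simp add: valf_nz[OF emb_nz] dec_emb idV)

lemma valf_jx: assumes "finite X" "x \<in> X" "a x \<in> carrier (obj V (X - {x}))"
  shows "valf V X v a (X - {x}) (jx X x) = a x"
  using assms by (simp add: valf_z[OF jx_hom[OF assms(2)] assms(2) jx_x[OF assms(2)]] dec_jx idV)

lemma factor:
  assumes fX: "finite X" and fW: "finite W" and phi: "\<phi> \<in> Hom_carrier R (shift (Mrep R X)) V"
    and g: "g \<in> FI_hom X (sigma_obj W)"
  shows "\<phi> W (ind R (FI_hom X (sigma_obj W)) g) = valf V X (piX R X \<phi>) (aphi R X \<phi>) W g"
proof (cases "0 \<in> g ` X")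
  case True
  then obtain x where x: "x \<in> X" "g x = 0" by (metis imageE)
  let ?X = "X - {x}"
  let ?h = "dec g ?X"
  have h: "?h \<in> FI_hom ?X W" by (rule dec_hom_z[OF g x])
  have fX': "finite ?X" using fX by simp
  have geq: "compose X (sigma_mor ?X ?h) (jx X x) = g"
  proof (rule ext)
    fix z show "compose X (sigma_mor ?X ?h) (jx X x) z = g z"
    proof (cases "z \<in> X")
      case True
      show ?thesis
      proof (cases "z = x")
        case True then show ?thesis using x by (simp add: compose_def jx_def sigma_mor_0)
      next
        case False
        have "g z \<noteq> g x" using False x \<open>z \<in> X\<close> inj_onD[OF FI_homD(2)[OF g]] by blast
        then have "g z \<noteq> 0" using x by simp
        then have "Suc (g z - 1) = g z" by simp
        then show ?thesis using False \<open>z \<in> X\<close> by (simp add: compose_def jx_def sigma_mor_Suc dec_def)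
      qed
    next
      case False
      then show ?thesis using FI_homD(1)[OF g] by (simp add: compose_def PiE_def extensional_def)
    qed
  qed
  have jxh: "jx X x \<in> FI_hom X (sigma_obj ?X)" by (rule jx_hom[OF x(1)])
  have fB: "finite (FI_hom X (sigma_obj ?X))" by (simp add: finite_FI_hom fX finite_sigma)
  have k: "(\<lambda>k. compose X (sigma_mor ?X ?h) k) \<in> FI_hom X (sigma_obj ?X) \<rightarrow> FI_hom X (sigma_obj W)"
    using FI_hom_compose sigma_mor_hom[OF h] by blast
  have "ind R (FI_hom X (sigma_obj W)) g = lin_ext R (FI_hom X (sigma_obj ?X)) (FI_hom X (sigma_obj W))
      (\<lambda>k. compose X (sigma_mor ?X ?h) k) (ind R (FI_hom X (sigma_obj ?X)) (jx X x))"
    using lin_ext_ind[OF fB jxh k] geq by simp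
  then have "\<phi> W (ind R (FI_hom X (sigma_obj W)) g) = mor V ?X W ?h (\<phi> ?X (ind R (FI_hom X (sigma_obj ?X)) (jx X x)))"
    using Hom_carrierD(2)[OF phi fX' fW h ind_in] by simp
  also have "\<dots> = valf V X (piX R X \<phi>) (aphi R X \<phi>) W g"
    using x by (simp add: valf_z[OF g x] aphi_def)
  finally show ?thesis .
next
  case False
  let ?h = "dec g X"
  have h: "?h \<in> FI_hom X W" by (rule dec_hom_nz[OF g False])
  have geq: "compose X (sigma_mor X ?h) (emb X) = g"
  proof (rule ext)
    fix z show "compose X (sigma_mor X ?h) (emb X) z = g z"
    proof (cases "z \<in> X")
      case True
      then have "g z \<noteq> 0" using False by (metis image_eqI)
      then have "Suc (g z - 1) = g z" by simp
      then show ?thesis using \<open>z \<in> X\<close> by (simp add: compose_def emb_def sigma_mor_Suc dec_def)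
    next
      case False
      then show ?thesis using FI_homD(1)[OF g] by (simp add: compose_def PiE_def extensional_def)
    qed
  qed
  have fB: "finite (FI_hom X (sigma_obj X))" by (simp add: finite_FI_hom fX finite_sigma)
  have k: "(\<lambda>k. compose X (sigma_mor X ?h) k) \<in> FI_hom X (sigma_obj X) \<rightarrow> FI_hom X (sigma_obj W)"
    using FI_hom_compose sigma_mor_hom[OF h] by blast
  have "ind R (FI_hom X (sigma_obj W)) g = lin_ext R (FI_hom X (sigma_obj X)) (FI_hom X (sigma_obj W))
      (\<lambda>k. compose X (sigma_mor X ?h) k) (ind R (FI_hom X (sigma_obj X)) (emb X))"
    using lin_ext_ind[OF fB emb_hom k] geq by simp
  then have "\<phi> W (ind R (FI_hom X (sigma_obj W)) g) = mor V X W ?h (piX R X \<phi>)"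
    using Hom_carrierD(2)[OF phi fX fW h ind_in] by (simp add: piX_def)
  also have "\<dots> = valf V X (piX R X \<phi>) (aphi R X \<phi>) W g"
    by (simp add: valf_nz[OF False])
  finally show ?thesis .
qed

lemma piX_closed: "finite X \<Longrightarrow> \<phi> \<in> Hom_carrier R (shift (Mrep R X)) V \<Longrightarrow> piX R X \<phi> \<in> carrier (obj V X)"
  unfolding piX_def by (rule Hom_closed[OF _ _ ind_in])

lemma aphi_closed: "finite X \<Longrightarrow> \<phi> \<in> Hom_carrier R (shift (Mrep R X)) V \<Longrightarrow>
   aphi R X \<phi> \<in> (\<Pi>\<^sub>E x\<in>X. carrier (obj V (X - {x})))"
proof -
  assume fX: "finite X" and phi: "\<phi> \<in> Hom_carrier R (shift (Mrep R X)) V"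
  have "\<phi> (X - {x}) (ind R (FI_hom X (sigma_obj (X - {x}))) (jx X x)) \<in> carrier (obj V (X - {x}))" for x
    by (rule Hom_closed[OF phi _ ind_in]) (use fX in simp)
  then show ?thesis unfolding aphi_def by auto
qed

lemma yoneda2:
  assumes fX: "finite X" and phi: "\<phi> \<in> Hom_carrier R (shift (Mrep R X)) V"
  shows "\<phi> = Psi R V X (valf V X (piX R X \<phi>) (aphi R X \<phi>))"
proof -
  have "\<phi> = Psi R V X (\<lambda>W g. \<phi> W (ind R (FI_hom X (sigma_obj W)) g))" by (rule yoneda[OF fX phi])
  also have "\<dots> = Psi R V X (valf V X (piX R X \<phi>) (aphi R X \<phi>))"
  proof (rule Psi_cong[OF fX])
    fix W g assume "finite W" "g \<in> FI_hom X (sigma_obj W)"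
    then show "valf V X (piX R X \<phi>) (aphi R X \<phi>) W g \<in> carrier (obj V W)"
      using valf_closed[OF fX _ piX_closed[OF fX phi]] aphi_closed[OF fX phi] by (auto simp: PiE_iff)
    show "\<phi> W (ind R (FI_hom X (sigma_obj W)) g) = valf V X (piX R X \<phi>) (aphi R X \<phi>) W g"
      by (rule factor[OF fX \<open>finite W\<close> phi \<open>g \<in> _\<close>])
  qed
  finally show ?thesis .
qed

end


context FIctx begin

lemma valf_add:
  assumes fX: "finite X" and fW: "finite W" and g: "g \<in> FI_hom X (sigma_obj W)"
    and v: "v \<in> carrier (obj V X)" and v': "v' \<in> carrier (obj V X)"
    and a: "\<And>x. x \<in> X \<Longrightarrow> a x \<in> carrier (obj V (X - {x}))"
    and a': "\<And>x. x \<in> X \<Longrightarrow> a' x \<in> carrier (obj V (X - {x}))"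
    and b: "\<And>x. x \<in> X \<Longrightarrow> b x = a x \<oplus>\<^bsub>obj V (X - {x})\<^esub> a' x"
  shows "valf V X (v \<oplus>\<^bsub>obj V X\<^esub> v') b W g = valf V X v a W g \<oplus>\<^bsub>obj V W\<^esub> valf V X v' a' W g"
proof (cases "0 \<in> g ` X")
  case True
  then obtain x where x: "x \<in> X" "g x = 0" by (metis imageE)
  show ?thesis unfolding valf_z[OF g x] b[OF x(1)]
    by (rule morV_add) (use fX fW dec_hom_z[OF g x] a[OF x(1)] a'[OF x(1)] in auto)
next
  case False
  show ?thesis unfolding valf_nz[OF False]
    by (rule morV_add) (use fX fW dec_hom_nz[OF g False] v v' in auto)
qed

lemma valf_smult:
  assumes fX: "finite X" and fW: "finite W" and g: "g \<in> FI_hom X (sigma_obj W)" and c: "c \<in> carrier R"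
    and v: "v \<in> carrier (obj V X)"
    and a: "\<And>x. x \<in> X \<Longrightarrow> a x \<in> carrier (obj V (X - {x}))"
    and b: "\<And>x. x \<in> X \<Longrightarrow> b x = c \<odot>\<^bsub>obj V (X - {x})\<^esub> a x"
  shows "valf V X (c \<odot>\<^bsub>obj V X\<^esub> v) b W g = c \<odot>\<^bsub>obj V W\<^esub> valf V X v a W g"
proof (cases "0 \<in> g ` X")
  case True
  then obtain x where x: "x \<in> X" "g x = 0" by (metis imageE)
  show ?thesis unfolding valf_z[OF g x] b[OF x(1)]
    by (rule morV_smult) (use fX fW dec_hom_z[OF g x] a[OF x(1)] c in auto)
next
  case False
  show ?thesis unfolding valf_nz[OF False]
    by (rule morV_smult) (use fX fW dec_hom_nz[OF g False] v c in auto)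
qed

lemma valf_pull_inj:
  assumes fX: "finite X" and fY: "finite Y" and fW: "finite W" and f: "f \<in> FI_hom X Y"
    and a: "\<And>x. x \<in> X \<Longrightarrow> a x \<in> carrier (obj V (X - {x}))"
    and k: "k \<in> FI_hom Y (sigma_obj W)"
  shows "valf V Y \<zero>\<^bsub>obj V Y\<^esub> (mor (negshift V) X Y f a) W k = valf V X \<zero>\<^bsub>obj V X\<^esub> a W (compose X k f)"
proof -
  let ?k = "compose X k f"
  have k': "?k \<in> FI_hom X (sigma_obj W)" by (rule FI_hom_compose[OF f k])
  have fimg: "f z \<in> Y" if "z \<in> X" for z using f that by (auto simp: FI_hom_def)
  have finj: "inj_on f X" using FI_homD(2)[OF f] .
  have kinj: "inj_on k Y" using FI_homD(2)[OF k] .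
  have kc: "?k z = k (f z)" if "z \<in> X" for z using that by (simp add: compose_def)
  show ?thesis
  proof (cases "0 \<in> k ` Y")
    case True
    then obtain y where y: "y \<in> Y" "k y = 0" by (metis imageE)
    show ?thesis
    proof (cases "\<exists>x\<in>X. f x = y")
      case True
      then obtain x where x: "x \<in> X" "f x = y" by blast
      have the: "(THE x. x \<in> X \<and> f x = y) = x"
        using x finj by (intro the_equality) (auto simp: inj_on_def)
      have k'x: "?k x = 0" using x y kc by simp
      have fr: "restrict f (X - {x}) \<in> FI_hom (X - {x}) (Y - {y})"
        using x finj fimg by (auto simp: FI_hom_def inj_on_def)
      have ns: "mor (negshift V) X Y f a y = mor V (X - {x}) (Y - {y}) (restrict f (X - {x})) (a x)"
        using True y the by (simp add: negshift_def Let_def)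
      have d: "dec ?k (X - {x}) = compose (X - {x}) (dec k (Y - {y})) (restrict f (X - {x}))"
      proof (rule ext)
        fix z show "dec ?k (X - {x}) z = compose (X - {x}) (dec k (Y - {y})) (restrict f (X - {x})) z"
        proof (cases "z \<in> X - {x}")
          case True
          then have "f z \<in> Y - {y}" using x finj fimg by (auto simp: inj_on_def)
          then show ?thesis using True kc by (simp add: dec_def compose_def)
        qed (auto simp: dec_def compose_def)
      qed
      have "valf V Y \<zero>\<^bsub>obj V Y\<^esub> (mor (negshift V) X Y f a) W k
          = mor V (Y - {y}) W (dec k (Y - {y})) (mor V (X - {x}) (Y - {y}) (restrict f (X - {x})) (a x))"
        by (simp add: valf_z[OF k y] ns)
      also have "\<dots> = mor V (X - {x}) W (compose (X - {x}) (dec k (Y - {y})) (restrict f (X - {x}))) (a x)"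
        using compV[OF _ _ fW fr dec_hom_z[OF k y] a[OF x(1)]] fX fY by simp
      also have "\<dots> = valf V X \<zero>\<^bsub>obj V X\<^esub> a W ?k"
        by (simp add: valf_z[OF k' x(1) k'x] d)
      finally show ?thesis .
    next
      case False
      have ns: "mor (negshift V) X Y f a y = \<zero>\<^bsub>obj V (Y - {y})\<^esub>"
        using False y by (simp add: negshift_def)
      have nz: "0 \<notin> ?k ` X"
      proof
        assume "0 \<in> ?k ` X"
        then obtain z where z: "z \<in> X" "?k z = 0" by (metis imageE)
        then have "k (f z) = k y" using kc y by simp
        then have "f z = y" using kinj fimg[OF z(1)] y(1) by (auto simp: inj_on_def)
        then show False using False z(1) by blast
      qed
      show ?thesis
        unfolding valf_z[OF k y] ns valf_nz[OF nz]
        using morV_zero[OF _ fW dec_hom_z[OF k y]] morV_zero[OF fX fW dec_hom_nz[OF k' nz]] fY by simp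
    qed
  next
    case False
    have nz: "0 \<notin> ?k ` X"
    proof
      assume "0 \<in> ?k ` X"
      then obtain z where z: "z \<in> X" "?k z = 0" by (metis imageE)
      then show False using kc False fimg by (metis image_eqI)
    qed
    show ?thesis
      unfolding valf_nz[OF False] valf_nz[OF nz]
      using morV_zero[OF fY fW dec_hom_nz[OF k False]] morV_zero[OF fX fW dec_hom_nz[OF k' nz]] by simp
  qed
qed

lemma valf_pull_bij:
  assumes fX: "finite X" and fY: "finite Y" and fW: "finite W" and f: "f \<in> FB_hom X Y"
    and v: "v \<in> carrier (obj V X)"
    and k: "k \<in> FI_hom Y (sigma_obj W)"
  shows "valf V Y (mor V X Y f v) (restrict (\<lambda>y. \<zero>\<^bsub>obj V (Y - {y})\<^esub>) Y) W k
       = valf V X v (restrict (\<lambda>x. \<zero>\<^bsub>obj V (X - {x})\<^esub>) X) W (compose X k f)"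
proof -
  let ?k = "compose X k f"
  have fh: "f \<in> FI_hom X Y" and fim: "f ` X = Y" using f by (auto simp: FB_hom_def)
  have k': "?k \<in> FI_hom X (sigma_obj W)" by (rule FI_hom_compose[OF fh k])
  have fimg: "f z \<in> Y" if "z \<in> X" for z using fim that by auto
  have kc: "?k z = k (f z)" if "z \<in> X" for z using that by (simp add: compose_def)
  show ?thesis
  proof (cases "0 \<in> k ` Y")
    case True
    then obtain y where y: "y \<in> Y" "k y = 0" by (metis imageE)
    then obtain x where x: "x \<in> X" "f x = y" using fim by auto
    have k'x: "?k x = 0" using x y kc by simp
    show ?thesis
      unfolding valf_z[OF k y] valf_z[OF k' x(1) k'x]
      using morV_zero[OF _ fW dec_hom_z[OF k y]] morV_zero[OF _ fW dec_hom_z[OF k' x(1) k'x]] fX fY x y by simp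
  next
    case False
    have nz: "0 \<notin> ?k ` X"
    proof
      assume "0 \<in> ?k ` X"
      then obtain z where z: "z \<in> X" "?k z = 0" by (metis imageE)
      then show False using kc False fimg by (metis image_eqI)
    qed
    have d: "dec ?k X = compose X (dec k Y) f"
    proof (rule ext)
      fix z show "dec ?k X z = compose X (dec k Y) f z"
      proof (cases "z \<in> X")
        case True
        then show ?thesis using fimg kc by (simp add: dec_def compose_def)
      qed (auto simp: dec_def compose_def)
    qed
    show ?thesis
      unfolding valf_nz[OF False] valf_nz[OF nz] d
      using compV[OF fX fY fW fh dec_hom_nz[OF k False] v] by simp
  qed
qed

end


definition iota :: "('k, 'r) ring_scheme \<Rightarrow> ('k, 'v) FImod \<Rightarrow> nat set \<Rightarrow> (nat \<Rightarrow> 'v) \<Rightarrow> nat set \<Rightarrow> ((nat \<Rightarrow> nat) \<Rightarrow> 'k) \<Rightarrow> 'v" where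
  "iota R V X a = Psi R V X (valf V X \<zero>\<^bsub>obj V X\<^esub> a)"

definition zfam :: "('k, 'v) FImod \<Rightarrow> nat set \<Rightarrow> nat \<Rightarrow> 'v" where
  "zfam V X = restrict (\<lambda>x. \<zero>\<^bsub>obj V (X - {x})\<^esub>) X"

definition sec :: "('k, 'r) ring_scheme \<Rightarrow> ('k, 'v) FImod \<Rightarrow> nat set \<Rightarrow> 'v \<Rightarrow> nat set \<Rightarrow> ((nat \<Rightarrow> nat) \<Rightarrow> 'k) \<Rightarrow> 'v" where
  "sec R V X v = Psi R V X (valf V X v (zfam V X))"

context FIctx begin

lemma zV: "finite W \<Longrightarrow> \<zero>\<^bsub>obj V W\<^esub> \<in> carrier (obj V W)"
proof -
  assume "finite W"
  then interpret M: module R "obj V W" by (rule modV)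
  show ?thesis by simp
qed

lemma zV_add: "finite W \<Longrightarrow> \<zero>\<^bsub>obj V W\<^esub> \<oplus>\<^bsub>obj V W\<^esub> \<zero>\<^bsub>obj V W\<^esub> = \<zero>\<^bsub>obj V W\<^esub>"
proof -
  assume "finite W"
  then interpret M: module R "obj V W" by (rule modV)
  show ?thesis by simp
qed

lemma zV_smult: "finite W \<Longrightarrow> c \<in> carrier R \<Longrightarrow> c \<odot>\<^bsub>obj V W\<^esub> \<zero>\<^bsub>obj V W\<^esub> = \<zero>\<^bsub>obj V W\<^esub>"
proof -
  assume "finite W" "c \<in> carrier R"
  then interpret M: module R "obj V W" by (intro modV)
  show ?thesis using \<open>c \<in> carrier R\<close> by simp
qed

lemma zfam_closed: "finite X \<Longrightarrow> x \<in> X \<Longrightarrow> zfam V X x \<in> carrier (obj V (X - {x}))"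
  by (simp add: zfam_def zV)

lemma iota_hom: "finite X \<Longrightarrow> a \<in> (\<Pi>\<^sub>E x\<in>X. carrier (obj V (X - {x}))) \<Longrightarrow> iota R V X a \<in> Hom_carrier R (shift (Mrep R X)) V"
  unfolding iota_def by (rule valf_hom) (auto simp: zV)

lemma sec_hom: "finite X \<Longrightarrow> v \<in> carrier (obj V X) \<Longrightarrow> sec R V X v \<in> Hom_carrier R (shift (Mrep R X)) V"
  unfolding sec_def by (rule valf_hom) (auto simp: zfam_closed)

lemma pi_Psi:
  assumes fX: "finite X" and v: "v \<in> carrier (obj V X)" and a: "\<And>x. x \<in> X \<Longrightarrow> a x \<in> carrier (obj V (X - {x}))"
  shows "piX R X (Psi R V X (valf V X v a)) = v"
proof -
  have "piX R X (Psi R V X (valf V X v a)) = valf V X v a X (emb X)"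
    unfolding piX_def by (rule Psi_eval[OF fX fX emb_hom]) (rule valf_closed[OF fX fX v a])
  also have "\<dots> = v" by (rule valf_emb[OF fX v])
  finally show ?thesis .
qed

lemma Psi_jx:
  assumes fX: "finite X" and v: "v \<in> carrier (obj V X)" and a: "\<And>x. x \<in> X \<Longrightarrow> a x \<in> carrier (obj V (X - {x}))"
    and x: "x \<in> X"
  shows "Psi R V X (valf V X v a) (X - {x}) (ind R (FI_hom X (sigma_obj (X - {x}))) (jx X x)) = a x"
proof -
  have fX': "finite (X - {x})" using fX by simp
  have "Psi R V X (valf V X v a) (X - {x}) (ind R (FI_hom X (sigma_obj (X - {x}))) (jx X x)) = valf V X v a (X - {x}) (jx X x)"
    by (rule Psi_eval[OF fX fX' jx_hom[OF x]]) (rule valf_closed[OF fX fX' v a])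
  also have "\<dots> = a x" by (rule valf_jx[where a=a, OF fX x a[OF x]])
  finally show ?thesis .
qed

end


context FIctx begin

lemma addV_closed: "finite W \<Longrightarrow> x \<in> carrier (obj V W) \<Longrightarrow> y \<in> carrier (obj V W) \<Longrightarrow> x \<oplus>\<^bsub>obj V W\<^esub> y \<in> carrier (obj V W)"
proof -
  assume A: "finite W" "x \<in> carrier (obj V W)" "y \<in> carrier (obj V W)"
  interpret M: module R "obj V W" using modV[OF \<open>finite W\<close>] .
  show ?thesis using A by simp
qed

lemma smultV_closed: "finite W \<Longrightarrow> c \<in> carrier R \<Longrightarrow> x \<in> carrier (obj V W) \<Longrightarrow> c \<odot>\<^bsub>obj V W\<^esub> x \<in> carrier (obj V W)"
proof -
  assume A: "finite W" "c \<in> carrier R" "x \<in> carrier (obj V W)"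
  interpret M: module R "obj V W" using modV[OF \<open>finite W\<close>] .
  show ?thesis using A by simp
qed

lemma iota_lin:
  assumes fX: "finite X"
  shows "lin_map R (obj (negshift V) X) (obj (coind R V) X) (iota R V X)"
  unfolding lin_map_def negshift_simps coind_obj Hom_mod_simps(1)
proof (intro conjI ballI)
  show "iota R V X \<in> (\<Pi>\<^sub>E x\<in>X. carrier (obj V (X - {x}))) \<rightarrow> Hom_carrier R (shift (Mrep R X)) V"
    using iota_hom[OF fX] by blast
next
  fix a b assume a: "a \<in> (\<Pi>\<^sub>E x\<in>X. carrier (obj V (X - {x})))" and b: "b \<in> (\<Pi>\<^sub>E x\<in>X. carrier (obj V (X - {x})))"
  have ac: "\<And>x. x \<in> X \<Longrightarrow> a x \<in> carrier (obj V (X - {x}))" using a by auto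
  have bc: "\<And>x. x \<in> X \<Longrightarrow> b x \<in> carrier (obj V (X - {x}))" using b by auto
  have z: "\<zero>\<^bsub>obj V X\<^esub> \<in> carrier (obj V X)" by (rule zV[OF fX])
  have "add (Hom_mod R (shift (Mrep R X)) V) (iota R V X a) (iota R V X b)
      = Psi R V X (\<lambda>W g. valf V X \<zero>\<^bsub>obj V X\<^esub> a W g \<oplus>\<^bsub>obj V W\<^esub> valf V X \<zero>\<^bsub>obj V X\<^esub> b W g)"
    unfolding iota_def by (rule Psi_add[OF fX]) (auto intro: valf_closed[OF fX _ z ac] valf_closed[OF fX _ z bc])
  also have "\<dots> = iota R V X (restrict (\<lambda>x. a x \<oplus>\<^bsub>obj V (X - {x})\<^esub> b x) X)"
    unfolding iota_def
  proof (rule Psi_cong[OF fX, symmetric])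
    fix W g assume W: "finite W" and g: "g \<in> FI_hom X (sigma_obj W)"
    show "valf V X \<zero>\<^bsub>obj V X\<^esub> a W g \<oplus>\<^bsub>obj V W\<^esub> valf V X \<zero>\<^bsub>obj V X\<^esub> b W g \<in> carrier (obj V W)"
      by (rule addV_closed[OF W valf_closed[OF fX W z ac g] valf_closed[OF fX W z bc g]])
    have "valf V X (\<zero>\<^bsub>obj V X\<^esub> \<oplus>\<^bsub>obj V X\<^esub> \<zero>\<^bsub>obj V X\<^esub>) (restrict (\<lambda>x. a x \<oplus>\<^bsub>obj V (X - {x})\<^esub> b x) X) W g
        = valf V X \<zero>\<^bsub>obj V X\<^esub> a W g \<oplus>\<^bsub>obj V W\<^esub> valf V X \<zero>\<^bsub>obj V X\<^esub> b W g"
      by (rule valf_add[OF fX W g z z ac bc]) auto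
    then show "valf V X \<zero>\<^bsub>obj V X\<^esub> (restrict (\<lambda>x. a x \<oplus>\<^bsub>obj V (X - {x})\<^esub> b x) X) W g
        = valf V X \<zero>\<^bsub>obj V X\<^esub> a W g \<oplus>\<^bsub>obj V W\<^esub> valf V X \<zero>\<^bsub>obj V X\<^esub> b W g"
      by (simp add: zV_add[OF fX])
  qed
  finally show "iota R V X (restrict (\<lambda>x. a x \<oplus>\<^bsub>obj V (X - {x})\<^esub> b x) X)
      = add (Hom_mod R (shift (Mrep R X)) V) (iota R V X a) (iota R V X b)" by simp
next
  fix c a assume c: "c \<in> carrier R" and a: "a \<in> (\<Pi>\<^sub>E x\<in>X. carrier (obj V (X - {x})))"
  have ac: "\<And>x. x \<in> X \<Longrightarrow> a x \<in> carrier (obj V (X - {x}))" using a by auto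
  have z: "\<zero>\<^bsub>obj V X\<^esub> \<in> carrier (obj V X)" by (rule zV[OF fX])
  have "smult (Hom_mod R (shift (Mrep R X)) V) c (iota R V X a)
      = Psi R V X (\<lambda>W g. c \<odot>\<^bsub>obj V W\<^esub> valf V X \<zero>\<^bsub>obj V X\<^esub> a W g)"
    unfolding iota_def by (rule Psi_smult[OF fX c]) (auto intro: valf_closed[OF fX _ z ac])
  also have "\<dots> = iota R V X (restrict (\<lambda>x. c \<odot>\<^bsub>obj V (X - {x})\<^esub> a x) X)"
    unfolding iota_def
  proof (rule Psi_cong[OF fX, symmetric])
    fix W g assume W: "finite W" and g: "g \<in> FI_hom X (sigma_obj W)"
    show "c \<odot>\<^bsub>obj V W\<^esub> valf V X \<zero>\<^bsub>obj V X\<^esub> a W g \<in> carrier (obj V W)"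
      by (rule smultV_closed[OF W c valf_closed[OF fX W z ac g]])
    have "valf V X (c \<odot>\<^bsub>obj V X\<^esub> \<zero>\<^bsub>obj V X\<^esub>) (restrict (\<lambda>x. c \<odot>\<^bsub>obj V (X - {x})\<^esub> a x) X) W g
        = c \<odot>\<^bsub>obj V W\<^esub> valf V X \<zero>\<^bsub>obj V X\<^esub> a W g"
      by (rule valf_smult[OF fX W g c z ac]) auto
    then show "valf V X \<zero>\<^bsub>obj V X\<^esub> (restrict (\<lambda>x. c \<odot>\<^bsub>obj V (X - {x})\<^esub> a x) X) W g
        = c \<odot>\<^bsub>obj V W\<^esub> valf V X \<zero>\<^bsub>obj V X\<^esub> a W g"
      by (simp add: zV_smult[OF fX c])
  qed
  finally show "iota R V X (restrict (\<lambda>x. c \<odot>\<^bsub>obj V (X - {x})\<^esub> a x) X)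
      = smult (Hom_mod R (shift (Mrep R X)) V) c (iota R V X a)" by simp
qed

lemma sec_lin:
  assumes fX: "finite X"
  shows "lin_map R (obj V X) (obj (coind R V) X) (sec R V X)"
  unfolding lin_map_def coind_obj Hom_mod_simps(1)
proof (intro conjI ballI)
  show "sec R V X \<in> carrier (obj V X) \<rightarrow> Hom_carrier R (shift (Mrep R X)) V"
    using sec_hom[OF fX] by blast
next
  fix v w assume v: "v \<in> carrier (obj V X)" and w: "w \<in> carrier (obj V X)"
  have zc: "\<And>x. x \<in> X \<Longrightarrow> zfam V X x \<in> carrier (obj V (X - {x}))" by (rule zfam_closed[OF fX])
  have "add (Hom_mod R (shift (Mrep R X)) V) (sec R V X v) (sec R V X w)
      = Psi R V X (\<lambda>W g. valf V X v (zfam V X) W g \<oplus>\<^bsub>obj V W\<^esub> valf V X w (zfam V X) W g)"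
    unfolding sec_def by (rule Psi_add[OF fX]) (auto intro: valf_closed[OF fX _ v zc] valf_closed[OF fX _ w zc])
  also have "\<dots> = sec R V X (v \<oplus>\<^bsub>obj V X\<^esub> w)"
    unfolding sec_def
  proof (rule Psi_cong[OF fX, symmetric])
    fix W g assume W: "finite W" and g: "g \<in> FI_hom X (sigma_obj W)"
    show "valf V X v (zfam V X) W g \<oplus>\<^bsub>obj V W\<^esub> valf V X w (zfam V X) W g \<in> carrier (obj V W)"
      by (rule addV_closed[OF W valf_closed[OF fX W v zc g] valf_closed[OF fX W w zc g]])
    show "valf V X (v \<oplus>\<^bsub>obj V X\<^esub> w) (zfam V X) W g
        = valf V X v (zfam V X) W g \<oplus>\<^bsub>obj V W\<^esub> valf V X w (zfam V X) W g"
      by (rule valf_add[OF fX W g v w zc zc]) (use zV_add[OF finite_Diff[OF fX]] in \<open>auto simp: zfam_def\<close>)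
  qed
  finally show "sec R V X (v \<oplus>\<^bsub>obj V X\<^esub> w) = add (Hom_mod R (shift (Mrep R X)) V) (sec R V X v) (sec R V X w)" by simp
next
  fix c v assume c: "c \<in> carrier R" and v: "v \<in> carrier (obj V X)"
  have zc: "\<And>x. x \<in> X \<Longrightarrow> zfam V X x \<in> carrier (obj V (X - {x}))" by (rule zfam_closed[OF fX])
  have "smult (Hom_mod R (shift (Mrep R X)) V) c (sec R V X v)
      = Psi R V X (\<lambda>W g. c \<odot>\<^bsub>obj V W\<^esub> valf V X v (zfam V X) W g)"
    unfolding sec_def by (rule Psi_smult[OF fX c]) (auto intro: valf_closed[OF fX _ v zc])
  also have "\<dots> = sec R V X (c \<odot>\<^bsub>obj V X\<^esub> v)"
    unfolding sec_def
  proof (rule Psi_cong[OF fX, symmetric])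
    fix W g assume W: "finite W" and g: "g \<in> FI_hom X (sigma_obj W)"
    show "c \<odot>\<^bsub>obj V W\<^esub> valf V X v (zfam V X) W g \<in> carrier (obj V W)"
      by (rule smultV_closed[OF W c valf_closed[OF fX W v zc g]])
    show "valf V X (c \<odot>\<^bsub>obj V X\<^esub> v) (zfam V X) W g = c \<odot>\<^bsub>obj V W\<^esub> valf V X v (zfam V X) W g"
      by (rule valf_smult[OF fX W g c v zc]) (use zV_smult[OF finite_Diff[OF fX] c] in \<open>auto simp: zfam_def\<close>)
  qed
  finally show "sec R V X (c \<odot>\<^bsub>obj V X\<^esub> v) = smult (Hom_mod R (shift (Mrep R X)) V) c (sec R V X v)" by simp
qed

end


context FIctx begin

lemma iota_nat:
  assumes fX: "finite X" and fY: "finite Y" and f: "f \<in> FI_hom X Y"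
    and a: "a \<in> (\<Pi>\<^sub>E x\<in>X. carrier (obj V (X - {x})))"
  shows "iota R V Y (mor (negshift V) X Y f a) = mor (coind R V) X Y f (iota R V X a)"
proof -
  have ac: "\<And>x. x \<in> X \<Longrightarrow> a x \<in> carrier (obj V (X - {x}))" using a by auto
  have z: "\<zero>\<^bsub>obj V X\<^esub> \<in> carrier (obj V X)" by (rule zV[OF fX])
  have "mor (coind R V) X Y f (iota R V X a) = Psi R V Y (\<lambda>W k. valf V X \<zero>\<^bsub>obj V X\<^esub> a W (compose X k f))"
    unfolding iota_def by (rule Psi_pull[OF fX fY f]) (auto intro: valf_closed[OF fX _ z ac])
  also have "\<dots> = iota R V Y (mor (negshift V) X Y f a)"
    unfolding iota_def
  proof (rule Psi_cong[OF fY, symmetric])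
    fix W k assume W: "finite W" and k: "k \<in> FI_hom Y (sigma_obj W)"
    show "valf V X \<zero>\<^bsub>obj V X\<^esub> a W (compose X k f) \<in> carrier (obj V W)"
      by (rule valf_closed[OF fX W z ac FI_hom_compose[OF f k]])
    show "valf V Y \<zero>\<^bsub>obj V Y\<^esub> (mor (negshift V) X Y f a) W k = valf V X \<zero>\<^bsub>obj V X\<^esub> a W (compose X k f)"
      by (rule valf_pull_inj[OF fX fY W f ac k])
  qed
  finally show ?thesis by simp
qed

lemma sec_nat:
  assumes fX: "finite X" and fY: "finite Y" and f: "f \<in> FB_hom X Y"
    and v: "v \<in> carrier (obj V X)"
  shows "sec R V Y (mor V X Y f v) = mor (coind R V) X Y f (sec R V X v)"
proof -
  have fh: "f \<in> FI_hom X Y" using f by (simp add: FB_hom_def)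
  have zc: "\<And>x. x \<in> X \<Longrightarrow> zfam V X x \<in> carrier (obj V (X - {x}))" by (rule zfam_closed[OF fX])
  have "mor (coind R V) X Y f (sec R V X v) = Psi R V Y (\<lambda>W k. valf V X v (zfam V X) W (compose X k f))"
    unfolding sec_def by (rule Psi_pull[OF fX fY fh]) (auto intro: valf_closed[OF fX _ v zc])
  also have "\<dots> = sec R V Y (mor V X Y f v)"
    unfolding sec_def
  proof (rule Psi_cong[OF fY, symmetric])
    fix W k assume W: "finite W" and k: "k \<in> FI_hom Y (sigma_obj W)"
    show "valf V X v (zfam V X) W (compose X k f) \<in> carrier (obj V W)"
      by (rule valf_closed[OF fX W v zc FI_hom_compose[OF fh k]])
    show "valf V Y (mor V X Y f v) (zfam V Y) W k = valf V X v (zfam V X) W (compose X k f)"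
      unfolding zfam_def by (rule valf_pull_bij[OF fX fY W f v k])
  qed
  finally show ?thesis by simp
qed

lemma pi_lin:
  assumes fX: "finite X"
  shows "lin_map R (obj (coind R V) X) (obj V X) (piX R X)"
  unfolding lin_map_def coind_obj Hom_mod_simps
proof (intro conjI ballI)
  show "piX R X \<in> Hom_carrier R (shift (Mrep R X)) V \<rightarrow> carrier (obj V X)"
    using piX_closed[OF fX] by blast
next
  fix \<phi> \<psi> assume "\<phi> \<in> Hom_carrier R (shift (Mrep R X)) V" "\<psi> \<in> Hom_carrier R (shift (Mrep R X)) V"
  show "piX R X (\<lambda>Y. if finite Y then restrict (\<lambda>m. \<phi> Y m \<oplus>\<^bsub>obj V Y\<^esub> \<psi> Y m) (carrier (obj (shift (Mrep R X)) Y)) else undefined)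
      = piX R X \<phi> \<oplus>\<^bsub>obj V X\<^esub> piX R X \<psi>"
    using fX ind_in[of "FI_hom X (sigma_obj X)" "emb X"] by (simp add: piX_def obj_shiftM free_simps)
next
  fix c \<phi> assume "c \<in> carrier R" "\<phi> \<in> Hom_carrier R (shift (Mrep R X)) V"
  show "piX R X (\<lambda>Y. if finite Y then restrict (\<lambda>m. c \<odot>\<^bsub>obj V Y\<^esub> \<phi> Y m) (carrier (obj (shift (Mrep R X)) Y)) else undefined)
      = c \<odot>\<^bsub>obj V X\<^esub> piX R X \<phi>"
    using fX ind_in[of "FI_hom X (sigma_obj X)" "emb X"] by (simp add: piX_def obj_shiftM free_simps)
qed

lemma pi_nat:
  assumes fX: "finite X" and fY: "finite Y" and f: "f \<in> FI_hom X Y"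
    and phi: "\<phi> \<in> Hom_carrier R (shift (Mrep R X)) V"
  shows "piX R Y (mor (coind R V) X Y f \<phi>) = mor V X Y f (piX R X \<phi>)"
proof -
  let ?BY = "FI_hom Y (sigma_obj Y)" and ?BXY = "FI_hom X (sigma_obj Y)" and ?BX = "FI_hom X (sigma_obj X)"
  have fin: "finite ?BY" "finite ?BX" by (simp_all add: finite_FI_hom fX fY finite_sigma)
  have c1: "(\<lambda>g. compose X g f) \<in> ?BY \<rightarrow> ?BXY" using FI_hom_compose[OF f] by blast
  have c2: "(\<lambda>k. compose X (sigma_mor X f) k) \<in> ?BX \<rightarrow> ?BXY" using FI_hom_compose sigma_mor_hom[OF f] by blast
  have ceq: "compose X (emb Y) f = compose X (sigma_mor X f) (emb X)"
  proof (rule ext)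
    fix z show "compose X (emb Y) f z = compose X (sigma_mor X f) (emb X) z"
    proof (cases "z \<in> X")
      case True
      then have "f z \<in> Y" using f by (auto simp: FI_hom_def)
      then show ?thesis using True by (simp add: compose_def emb_def sigma_mor_Suc)
    qed (simp add: compose_def)
  qed
  have "piX R Y (mor (coind R V) X Y f \<phi>) = \<phi> Y (rho R X Y f (sigma_obj Y) (ind R ?BY (emb Y)))"
    using fY ind_in[of "FI_hom Y (sigma_obj Y)" "emb Y"] by (simp add: piX_def coind_def obj_shiftM free_simps)
  also have "rho R X Y f (sigma_obj Y) (ind R ?BY (emb Y)) = ind R ?BXY (compose X (emb Y) f)"
    unfolding rho_def by (rule lin_ext_ind[OF fin(1) emb_hom c1])
  also have "\<dots> = lin_ext R ?BX ?BXY (\<lambda>k. compose X (sigma_mor X f) k) (ind R ?BX (emb X))"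
    unfolding ceq by (rule lin_ext_ind[OF fin(2) emb_hom c2, symmetric])
  also have "\<phi> Y \<dots> = mor V X Y f (piX R X \<phi>)"
    unfolding piX_def by (rule Hom_carrierD(2)[OF phi fX fY f ind_in])
  finally show ?thesis .
qed

lemma main:
  "short_exact R (negshift V) (coind R V) V (iota R V) (piX R) \<and>
   FB_morphism R V (coind R V) (sec R V) \<and>
   (\<forall>X. finite X \<longrightarrow> (\<forall>v\<in>carrier (obj V X). piX R X (sec R V X v) = v))"
proof (intro conjI allI impI ballI)
  show "short_exact R (negshift V) (coind R V) V (iota R V) (piX R)"
    unfolding short_exact_def
  proof (intro conjI allI impI)
    show "FI_morphism R (negshift V) (coind R V) (iota R V)"
      unfolding FI_morphism_def using iota_lin iota_nat by (simp add: negshift_simps)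
    show "FI_morphism R (coind R V) V (piX R)"
      unfolding FI_morphism_def using pi_lin pi_nat by (simp add: coind_obj Hom_mod_simps)
  next
    fix X :: "nat set" assume fX: "finite X"
    show "inj_on (iota R V X) (carrier (obj (negshift V) X))"
      unfolding negshift_simps
    proof (rule inj_onI)
      fix a b assume a: "a \<in> (\<Pi>\<^sub>E x\<in>X. carrier (obj V (X - {x})))" and b: "b \<in> (\<Pi>\<^sub>E x\<in>X. carrier (obj V (X - {x})))"
        and eq: "iota R V X a = iota R V X b"
      have ac: "\<And>x. x \<in> X \<Longrightarrow> a x \<in> carrier (obj V (X - {x}))" using a by auto
      have bc: "\<And>x. x \<in> X \<Longrightarrow> b x \<in> carrier (obj V (X - {x}))" using b by auto
      show "a = b"
      proof (rule PiE_ext[OF a b])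
        fix x assume x: "x \<in> X"
        have "a x = iota R V X a (X - {x}) (ind R (FI_hom X (sigma_obj (X - {x}))) (jx X x))"
          unfolding iota_def by (rule Psi_jx[OF fX zV[OF fX] ac x, symmetric])
        also have "\<dots> = iota R V X b (X - {x}) (ind R (FI_hom X (sigma_obj (X - {x}))) (jx X x))" using eq by simp
        also have "\<dots> = b x" unfolding iota_def by (rule Psi_jx[OF fX zV[OF fX] bc x])
        finally show "a x = b x" .
      qed
    qed
    show "piX R X ` carrier (obj (coind R V) X) = carrier (obj V X)"
      unfolding coind_obj Hom_mod_simps
    proof
      show "piX R X ` Hom_carrier R (shift (Mrep R X)) V \<subseteq> carrier (obj V X)" using piX_closed[OF fX] by blast
      show "carrier (obj V X) \<subseteq> piX R X ` Hom_carrier R (shift (Mrep R X)) V"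
      proof
        fix v assume v: "v \<in> carrier (obj V X)"
        have "piX R X (sec R V X v) = v" unfolding sec_def by (rule pi_Psi[OF fX v zfam_closed[OF fX]])
        then show "v \<in> piX R X ` Hom_carrier R (shift (Mrep R X)) V" using sec_hom[OF fX v] by force
      qed
    qed
    show "iota R V X ` carrier (obj (negshift V) X) = {b \<in> carrier (obj (coind R V) X). piX R X b = \<zero>\<^bsub>obj V X\<^esub>}"
      unfolding coind_obj Hom_mod_simps negshift_simps
    proof
      show "iota R V X ` (\<Pi>\<^sub>E x\<in>X. carrier (obj V (X - {x}))) \<subseteq> {b \<in> Hom_carrier R (shift (Mrep R X)) V. piX R X b = \<zero>\<^bsub>obj V X\<^esub>}"
      proof
        fix \<phi> assume "\<phi> \<in> iota R V X ` (\<Pi>\<^sub>E x\<in>X. carrier (obj V (X - {x})))"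
        then obtain a where a: "a \<in> (\<Pi>\<^sub>E x\<in>X. carrier (obj V (X - {x})))" and p: "\<phi> = iota R V X a" by blast
        have ac: "\<And>x. x \<in> X \<Longrightarrow> a x \<in> carrier (obj V (X - {x}))" using a by auto
        have "piX R X \<phi> = \<zero>\<^bsub>obj V X\<^esub>" unfolding p iota_def by (rule pi_Psi[OF fX zV[OF fX] ac])
        then show "\<phi> \<in> {b \<in> Hom_carrier R (shift (Mrep R X)) V. piX R X b = \<zero>\<^bsub>obj V X\<^esub>}"
          using iota_hom[OF fX a] p by simp
      qed
      show "{b \<in> Hom_carrier R (shift (Mrep R X)) V. piX R X b = \<zero>\<^bsub>obj V X\<^esub>} \<subseteq> iota R V X ` (\<Pi>\<^sub>E x\<in>X. carrier (obj V (X - {x})))"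
      proof
        fix \<phi> assume "\<phi> \<in> {b \<in> Hom_carrier R (shift (Mrep R X)) V. piX R X b = \<zero>\<^bsub>obj V X\<^esub>}"
        then have phi: "\<phi> \<in> Hom_carrier R (shift (Mrep R X)) V" and p0: "piX R X \<phi> = \<zero>\<^bsub>obj V X\<^esub>" by auto
        have "\<phi> = iota R V X (aphi R X \<phi>)" unfolding iota_def using yoneda2[OF fX phi] p0 by simp
        then show "\<phi> \<in> iota R V X ` (\<Pi>\<^sub>E x\<in>X. carrier (obj V (X - {x})))" using aphi_closed[OF fX phi] by blast
      qed
    qed
  qed
next
  show "FB_morphism R V (coind R V) (sec R V)"
    unfolding FB_morphism_def using sec_lin sec_nat by simp
next
  fix X :: "nat set" and v assume fX: "finite X" and v: "v \<in> carrier (obj V X)"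
  show "piX R X (sec R V X v) = v" unfolding sec_def by (rule pi_Psi[OF fX v zfam_closed[OF fX]])
qed

end

theorem mainTheorem4:
  fixes R :: "('k, 'r) ring_scheme" and V :: "('k, 'v) FImod"
  assumes "cring R" and "FI_module R V"
  shows "\<exists>\<iota> \<pi>. short_exact R (negshift V) (coind R V) V \<iota> \<pi> \<and>
           (\<exists>s. FB_morphism R V (coind R V) s \<and>
                (\<forall>X. finite X \<longrightarrow> (\<forall>v\<in>carrier (obj V X). \<pi> X (s X v) = v)))"
proof -
  interpret FIctx R V by (rule FIctx.intro[OF assms(1)]) (rule FIctx_axioms.intro[OF assms(2)])
  show ?thesis using main by blast
qed

end
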